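(* Let $\epsilon>0$, $A\in\mathbb{R}^{d_1\times d_2}$ and $$\tilde W(A)=\sup_{\Sigma}\ \langle A,\Sigma\rangle+\frac\epsilon2\log\det(\mathrm{Id}-\Sigma^\top\Sigma),$$ the supremum over $\Sigma\in\mathbb{R}^{d_1\times d_2}$ with $\mathrm{Id}-\Sigma^\top\Sigma\succ0$, and let $\Sigma$ be the maximizer (which satisfies $A=\epsilon\,\Sigma(\mathrm{Id}-\Sigma^\top\Sigma)^{-1}$). Then $$\nabla^2\tilde W(A)=\epsilon\Big(\epsilon^2(\mathrm{Id}-\Sigma^\top\Sigma)^{-1}\otimes(\mathrm{Id}-\Sigma\Sigma^\top)^{-1}+(A^\top\otimes A)\mathbb T\Big)^{-1},$$ where $\mathbb T$ is the linear map with $\mathbb T\,\mathrm{vec}(X)=\mathrm{vec}(X^\top)$.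
   Context: Matrices are identified with vectors via column-stacking $\mathrm{vec}$, with the Kronecker convention $\mathrm{vec}(BXC)=(C^\top\otimes B)\mathrm{vec}(X)$; $\langle A,\Sigma\rangle=\mathrm{tr}(A^\top\Sigma)$. *)

theory Defs
  imports "HOL-Analysis.Analysis"
begin

text \<open>Matrices in R^(m x n) are elements of real^'n^'m (row index 'm, column index 'n).\<close>

definition frob :: "real^'n^'m \<Rightarrow> real^'n^'m \<Rightarrow> real" where
  "frob A S = trace (transpose A ** S)"

definition pos_def :: "real^'n^'n \<Rightarrow> bool" where
  "pos_def M \<longleftrightarrow> transpose M = M \<and> (\<forall>x. x \<noteq> 0 \<longrightarrow> x \<bullet> (M *v x) > 0)"

text \<open>Column-stacking vec: the entry (i,j) of X sits at index (i,j) of the product type,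
  which corresponds to position i + m*j in column-stacking order.\<close>
definition vecm :: "real^'n^'m \<Rightarrow> real^('m \<times> 'n)" where
  "vecm X = (\<chi> p. X $ fst p $ snd p)"

definition unvec :: "real^('m \<times> 'n) \<Rightarrow> real^'n^'m" where
  "unvec v = (\<chi> i j. v $ (i, j))"

text \<open>Kronecker product with the convention vec(B X C) = (C^T \<otimes> B) vec(X):
  for C of size n1 x n2 and B of size m1 x m2,
  (C \<otimes> B) has entry C_{j l} B_{i k} at row (i,j), column (k,l).\<close>
definition kron :: "real^'n2^'n1 \<Rightarrow> real^'m2^'m1 \<Rightarrow> real^('m2 \<times> 'n2)^('m1 \<times> 'n1)" where
  "kron C B = (\<chi> r c. C $ snd r $ snd c * B $ fst r $ fst c)"

text \<open>Commutation matrix T with T vec(X) = vec(X^T), X of size m x n.\<close>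
definition commT :: "real^('m::finite \<times> 'n::finite)^('n \<times> 'm)" where
  "commT = (\<chi> r c. if fst c = snd r \<and> snd c = fst r then 1 else 0)"

definition feasible :: "real^'d2^'d1 \<Rightarrow> bool" where
  "feasible S \<longleftrightarrow> pos_def (mat 1 - transpose S ** S)"

definition objective :: "real \<Rightarrow> real^'d2^'d1 \<Rightarrow> real^'d2^'d1 \<Rightarrow> real" where
  "objective eps A S = frob A S + eps / 2 * ln (det (mat 1 - transpose S ** S))"

definition Wt :: "real \<Rightarrow> real^'d2^'d1 \<Rightarrow> real" where
  "Wt eps A = (SUP S \<in> {S. feasible S}. objective eps A S)"

definition has_hessian :: "(real^'n^'m \<Rightarrow> real) \<Rightarrow> real^('m \<times> 'n)^('m \<times> 'n) \<Rightarrow> real^'n^'m \<Rightarrow> bool" where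
  "has_hessian f H A \<longleftrightarrow> (\<exists>G. (\<forall>\<^sub>F B in nhds A. (f has_derivative (\<lambda>X. frob (G B) X)) (at B))
      \<and> (G has_derivative (\<lambda>X. unvec (H *v vecm X))) (at A))"

end

theory Submission
  imports Defs
begin


lemma minv_left: "invertible (A::real^'n^'n) \<Longrightarrow> matrix_inv A ** A = mat 1"
  unfolding matrix_inv_def invertible_def by (rule someI2_ex) auto

lemma minv_right: "invertible (A::real^'n^'n) \<Longrightarrow> A ** matrix_inv A = mat 1"
  unfolding matrix_inv_def invertible_def by (rule someI2_ex) auto

lemma invertible_if_right: "(A::real^'n^'n) ** B = mat 1 \<Longrightarrow> invertible A"
  using invertible_right_inverse by blast

lemma minv_unique: assumes "(A::real^'n^'n) ** B = mat 1" shows "matrix_inv A = B"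
proof -
  have i: "invertible A" using assms invertible_if_right by blast
  have "matrix_inv A = matrix_inv A ** (A ** B)" using assms by simp
  also have "\<dots> = B" using minv_left[OF i] by (simp add: matrix_mul_assoc)
  finally show ?thesis .
qed

lemma invertible_minv: "invertible (A::real^'n^'n) \<Longrightarrow> invertible (matrix_inv A)"
  using minv_left invertible_if_right by blast

lemma minv_minv: "invertible (A::real^'n^'n) \<Longrightarrow> matrix_inv (matrix_inv A) = A"
  using minv_left minv_unique by blast

lemma minv_transpose: "invertible (A::real^'n^'n) \<Longrightarrow> matrix_inv (transpose A) = transpose (matrix_inv A)"
  by (rule minv_unique) (metis minv_left matrix_transpose_mul transpose_mat)

lemma minv_mult: assumes "invertible (A::real^'n^'n)" "invertible (B::real^'n^'n)"
  shows "matrix_inv (A ** B) = matrix_inv B ** matrix_inv A"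
proof (rule minv_unique)
  have "A ** B ** (matrix_inv B ** matrix_inv A) = A ** (B ** matrix_inv B) ** matrix_inv A"
    by (simp add: matrix_mul_assoc)
  then show "A ** B ** (matrix_inv B ** matrix_inv A) = mat 1"
    using minv_right[OF assms(1)] minv_right[OF assms(2)] by simp
qed

lemma invertible_mult': "invertible (A::real^'n^'n) \<Longrightarrow> invertible B \<Longrightarrow> invertible (A ** B)"
  by (simp add: invertible_mult)

lemma dot_mv_transpose: "x \<bullet> ((M::real^'n^'m) *v y) = (transpose M *v x) \<bullet> y"
  unfolding inner_vec_def matrix_vector_mult_def transpose_def
  by (simp add: sum_distrib_left sum_distrib_right mult_ac) (rule sum.swap)

lemma dot_mv_sym: "transpose M = M \<Longrightarrow> x \<bullet> ((M::real^'n^'n) *v y) = (M *v x) \<bullet> y"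
  by (metis dot_mv_transpose)

lemma frob_inner: "frob A X = A \<bullet> X"
proof -
  have "frob A X = (\<Sum>j\<in>UNIV. \<Sum>k\<in>UNIV. A$k$j * X$k$j)"
    unfolding frob_def trace_def matrix_matrix_mult_def transpose_def by simp
  also have "\<dots> = (\<Sum>k\<in>UNIV. \<Sum>j\<in>UNIV. A$k$j * X$k$j)" by (rule sum.swap)
  also have "\<dots> = A \<bullet> X" by (simp add: inner_vec_def)
  finally show ?thesis .
qed

lemma trace_transpose': "trace (transpose (A::real^'n^'n)) = trace A"
  by (simp add: trace_def transpose_def)

lemma trace_smult: "trace (c *\<^sub>R (A::real^'n^'n)) = c * trace A"
  by (simp add: trace_def sum_distrib_left)

lemma smult_mm_left: "(c *\<^sub>R (A::real^'n^'m)) ** B = c *\<^sub>R (A ** B)"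
  by (simp add: matrix_matrix_mult_def vec_eq_iff sum_distrib_left mult_ac)

lemma smult_mm_right: "(A::real^'n^'m) ** (c *\<^sub>R B) = c *\<^sub>R (A ** B)"
  by (simp add: matrix_matrix_mult_def vec_eq_iff sum_distrib_left mult_ac)

lemma transpose_smult: "transpose (c *\<^sub>R (A::real^'n^'m)) = c *\<^sub>R transpose A"
  by (simp add: transpose_def vec_eq_iff)

lemma transpose_add': "transpose ((A::real^'n^'m) + B) = transpose A + transpose B"
  by (simp add: transpose_def vec_eq_iff)

lemma transpose_diff': "transpose ((A::real^'n^'m) - B) = transpose A - transpose B"
  by (simp add: transpose_def vec_eq_iff)

lemma trace_ttD: "trace (transpose (D::real^'n^'m) ** D) = D \<bullet> D"
  using frob_inner[of D D] by (simp add: frob_def)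

lemma mat1_quad: "x \<bullet> ((mat 1 - transpose T ** (T::real^'n^'m)) *v x) = x \<bullet> x - (T *v x) \<bullet> (T *v x)"
proof -
  have "(mat 1 - transpose T ** T) *v x = x - transpose T *v (T *v x)"
    by (simp add: matrix_vector_mult_diff_rdistrib matrix_vector_mul_assoc)
  then show ?thesis by (simp add: inner_diff_right dot_mv_transpose inner_commute)
qed

lemma pos_def_inj: "pos_def P \<Longrightarrow> P *v x = 0 \<Longrightarrow> x = (0::real^'n)"
  unfolding pos_def_def by (metis inner_zero_right less_irrefl)

lemma pos_def_invertible: "pos_def (P::real^'n^'n) \<Longrightarrow> invertible P"
  using pos_def_inj matrix_left_invertible_ker invertible_left_inverse by blast

lemma pos_def_minv: assumes "pos_def (P::real^'n^'n)" shows "pos_def (matrix_inv P)"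
proof -
  have i: "invertible P" using assms pos_def_invertible by blast
  have s: "transpose P = P" using assms pos_def_def by blast
  have ts: "transpose (matrix_inv P) = matrix_inv P"
    using minv_transpose[OF i] s by simp
  show ?thesis unfolding pos_def_def
  proof (intro conjI ts allI impI)
    fix x :: "real^'n" assume x: "x \<noteq> 0"
    define y where "y = matrix_inv P *v x"
    have xy: "x = P *v y" using minv_right[OF i] by (simp add: y_def matrix_vector_mul_assoc)
    have "y \<noteq> 0" using x xy by auto
    then have "y \<bullet> (P *v y) > 0" using assms pos_def_def by blast
    moreover have "x \<bullet> (matrix_inv P *v x) = y \<bullet> (P *v y)"
      using xy y_def by (simp add: inner_commute)
    ultimately show "x \<bullet> (matrix_inv P *v x) > 0" by simp
  qed
qed


lemma quad_zero: assumes "\<And>t::real. 2*t*a + t^2*b \<le> 0" shows "a = 0"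
proof (rule ccontr)
  assume a: "a \<noteq> 0"
  define t where "t = a / (\<bar>b\<bar> + 1)"
  have pos: "\<bar>b\<bar> + 1 > 0" by simp
  have "2*t*a + t^2*b \<le> 0" by (rule assms)
  then have "(2*t*a + t^2*b) * (\<bar>b\<bar>+1)^2 \<le> 0"
    by (simp add: mult_nonpos_nonneg)
  moreover have "(2*t*a + t^2*b) * (\<bar>b\<bar>+1)^2 = a^2 * (2*(\<bar>b\<bar>+1) + b)"
  proof -
    have tc: "t * (\<bar>b\<bar>+1) = a" unfolding t_def using pos by simp
    have "(2*t*a + t^2*b) * (\<bar>b\<bar>+1)^2 = 2*a*(t*(\<bar>b\<bar>+1))*(\<bar>b\<bar>+1) + (t*(\<bar>b\<bar>+1))^2*b"
      by (simp add: algebra_simps power2_eq_square)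
    then show ?thesis unfolding tc by (simp add: algebra_simps power2_eq_square)
  qed
  moreover have "a^2 * (2*(\<bar>b\<bar>+1) + b) > 0"
    using a by (intro mult_pos_pos) (auto simp: abs_if)
  ultimately show False by linarith
qed

lemma eigvec_exists:
  fixes M :: "real^'n^'n"
  assumes sym: "transpose M = M" and sub: "subspace V" and inv: "\<forall>x\<in>V. M *v x \<in> V"
    and ne: "V \<noteq> {0}"
  shows "\<exists>x\<in>V. norm x = 1 \<and> (\<exists>l. M *v x = l *\<^sub>R x)"
proof -
  define S where "S = sphere (0::real^'n) 1 \<inter> V"
  have cS: "compact S" unfolding S_def
    using compact_Int_closed[OF compact_sphere closed_subspace[OF sub]] .
  obtain v where v: "v \<in> V" "v \<noteq> 0" using ne sub subspace_0 by blast
  have "(1/norm v) *\<^sub>R v \<in> S" using v sub unfolding S_def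
    by (auto simp: subspace_scale)
  then have neS: "S \<noteq> {}" by blast
  have cont: "continuous_on S (\<lambda>x. x \<bullet> (M *v x))"
    by (intro continuous_on_inner continuous_on_id matrix_vector_mult_linear_continuous_on)
  obtain x where xS: "x \<in> S" and xmax: "\<And>y. y \<in> S \<Longrightarrow> y \<bullet> (M *v y) \<le> x \<bullet> (M *v x)"
    using continuous_attains_sup[OF cS neS cont] by blast
  define l where "l = x \<bullet> (M *v x)"
  have xV: "x \<in> V" and nx: "norm x = 1" using xS by (auto simp: S_def)
  have xx: "x \<bullet> x = 1" using nx by (simp add: norm_eq_sqrt_inner)
  have symq: "\<And>u w. u \<bullet> (M *v w) = w \<bullet> (M *v u)"
    by (metis dot_mv_sym sym inner_commute)
  have le: "z \<bullet> (M *v z) \<le> l * (z \<bullet> z)" if zV: "z \<in> V" and zn: "z \<noteq> 0" for z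
  proof -
    define c where "c = 1 / norm z"
    have cz: "c *\<^sub>R z \<in> S" using zV zn sub unfolding S_def c_def by (auto simp: subspace_scale)
    have "(c *\<^sub>R z) \<bullet> (M *v (c *\<^sub>R z)) \<le> l" using xmax[OF cz] l_def by simp
    then have "c^2 * (z \<bullet> (M *v z)) \<le> l"
      by (simp add: matrix_vector_mult_scaleR power2_eq_square mult_ac)
    moreover have "c^2 * (z \<bullet> z) = 1" using zn
      by (simp add: c_def power2_eq_square norm_eq_sqrt_inner field_simps)
    moreover have "c^2 > 0" using zn by (simp add: c_def)
    ultimately have h1: "c^2 * (z \<bullet> (M *v z)) \<le> l" and h2: "c^2 * (z \<bullet> z) = 1" by auto
    have "z \<bullet> (M *v z) = (c^2 * (z \<bullet> (M *v z))) * (z \<bullet> z)"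
    proof -
      have "z \<bullet> (M *v z) = z \<bullet> (M *v z) * (c^2 * (z \<bullet> z))" using h2 by simp
      then show ?thesis by (simp add: mult_ac)
    qed
    also have "\<dots> \<le> l * (z \<bullet> z)" using h1 by (intro mult_right_mono) auto
    finally show ?thesis .
  qed
  have orth: "y \<bullet> (M *v x) = 0" if yV: "y \<in> V" and yx: "y \<bullet> x = 0" for y
  proof -
    have "2*t*(y \<bullet> (M *v x)) + t^2*(y \<bullet> (M *v y) - l * (y \<bullet> y)) \<le> 0" for t
    proof -
      define z where "z = x + t *\<^sub>R y"
      have zV: "z \<in> V" using xV yV sub by (simp add: z_def subspace_add subspace_scale)
      have "x \<bullet> z = 1" using xx yx by (simp add: z_def inner_add_right inner_commute[of x y])
      then have zn: "z \<noteq> 0" by auto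
      have "z \<bullet> (M *v z) = l + 2*t*(y \<bullet> (M *v x)) + t^2 * (y \<bullet> (M *v y))"
        unfolding z_def l_def
        by (simp add: matrix_vector_right_distrib matrix_vector_mult_scaleR inner_add_left
            inner_add_right symq[of x y] power2_eq_square algebra_simps)
      moreover have "z \<bullet> z = 1 + t^2 * (y \<bullet> y)"
        unfolding z_def using xx yx
        by (simp add: inner_add_left inner_add_right inner_commute power2_eq_square algebra_simps)
      ultimately show ?thesis using le[OF zV zn] by (simp add: algebra_simps)
    qed
    then show ?thesis by (rule quad_zero)
  qed
  define w where "w = M *v x - l *\<^sub>R x"
  have wV: "w \<in> V" using xV inv sub by (simp add: w_def subspace_diff subspace_scale)
  have wx: "w \<bullet> x = 0" unfolding w_def l_def using xx
    by (simp add: inner_diff_left inner_diff_right inner_commute symq)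
  have "w \<bullet> w = w \<bullet> (M *v x) - l * (w \<bullet> x)" by (simp add: w_def inner_diff_right)
  also have "\<dots> = 0" using orth[OF wV wx] wx by simp
  finally have "w = 0" by simp
  then have "M *v x = l *\<^sub>R x" by (simp add: w_def)
  then show ?thesis using xV nx by blast
qed

lemma spectral_sub:
  fixes M :: "real^'n^'n"
  assumes sym: "transpose M = M"
  shows "subspace V \<Longrightarrow> (\<forall>x\<in>V. M *v x \<in> V) \<Longrightarrow> \<exists>B. finite B \<and> B \<subseteq> V \<and> V \<subseteq> span B
     \<and> pairwise orthogonal B \<and> (\<forall>b\<in>B. norm b = 1 \<and> (\<exists>l. M *v b = l *\<^sub>R b))"
proof (induction "dim V" arbitrary: V rule: less_induct)
  case less
  show ?case
  proof (cases "V = {0}")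
    case True
    then show ?thesis by (intro exI[of _ "{}"]) auto
  next
    case False
    obtain x l where xV: "x \<in> V" and nx: "norm x = 1" and ev: "M *v x = l *\<^sub>R x"
      using eigvec_exists[OF sym less.prems(1) less.prems(2) False] by blast
    define V' where "V' = {y \<in> V. x \<bullet> y = 0}"
    have sub': "subspace V'" using less.prems(1) unfolding V'_def subspace_def
      by (auto simp: inner_add_right)
    have symq: "\<And>u w. u \<bullet> (M *v w) = (M *v u) \<bullet> w"
      by (metis dot_mv_sym sym)
    have inv': "\<forall>y\<in>V'. M *v y \<in> V'" using less.prems(2) unfolding V'_def
      using symq[of x] ev by auto
    have xx: "x \<bullet> x = 1" using nx by (simp add: norm_eq_sqrt_inner)
    have "x \<notin> V'" using xx by (simp add: V'_def)
    then have "V' \<subset> V" using xV unfolding V'_def by blast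
    moreover have e1: "span V' = V'" using sub' by (simp add: span_eq_iff)
    moreover have e2: "span V = V" using less.prems(1) by (simp add: span_eq_iff)
    ultimately have "span V' \<subset> span V" by (simp only: e1 e2)
    then have "dim V' < dim V" by (rule dim_psubset)
    from less.hyps[OF this sub' inv'] obtain B where B: "finite B" "B \<subseteq> V'" "V' \<subseteq> span B"
      "pairwise orthogonal B" "\<forall>b\<in>B. norm b = 1 \<and> (\<exists>l. M *v b = l *\<^sub>R b)" by blast
    show ?thesis
    proof (intro exI[of _ "insert x B"] conjI)
      show "finite (insert x B)" using B by simp
      show "insert x B \<subseteq> V" using B xV unfolding V'_def by auto
      show "V \<subseteq> span (insert x B)"
      proof
        fix v assume vV: "v \<in> V"
        have "v - (x \<bullet> v) *\<^sub>R x \<in> V'" unfolding V'_def using vV xV less.prems(1) xx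
          by (simp add: subspace_diff subspace_scale inner_diff_right)
        then have "v - (x \<bullet> v) *\<^sub>R x \<in> span (insert x B)"
          using B(3) span_mono[of B "insert x B"] by auto
        moreover have "(x \<bullet> v) *\<^sub>R x \<in> span (insert x B)" by (simp add: span_base span_mul)
        ultimately have "(v - (x \<bullet> v) *\<^sub>R x) + (x \<bullet> v) *\<^sub>R x \<in> span (insert x B)"
          by (rule span_add)
        then show "v \<in> span (insert x B)" by simp
      qed
      show "pairwise orthogonal (insert x B)"
        using B(2,4) unfolding V'_def pairwise_def orthogonal_def
        by (auto simp: inner_commute)
      show "\<forall>b\<in>insert x B. norm b = 1 \<and> (\<exists>l. M *v b = l *\<^sub>R b)"
        using B(5) nx ev by auto
    qed
  qed
qed

definition diagm :: "real^'n \<Rightarrow> real^'n^'n" where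
  "diagm d = (\<chi> i j. if i = j then d$i else 0)"

lemma spectral:
  fixes M :: "real^'n^'n"
  assumes sym: "transpose M = M"
  shows "\<exists>(Q::real^'n^'n) d. transpose Q ** Q = mat 1 \<and> Q ** transpose Q = mat 1 \<and> M = Q ** diagm d ** transpose Q"
proof -
  obtain B where B: "finite B" "UNIV \<subseteq> span B" "pairwise orthogonal B"
    "\<forall>b\<in>B. norm b = 1 \<and> (\<exists>l. M *v b = l *\<^sub>R b)"
    using spectral_sub[OF sym, of UNIV] by (auto simp: subspace_UNIV)
  have "0 \<notin> B" using B(4) by fastforce
  then have ind: "independent B" using B(3) pairwise_orthogonal_independent by blast
  have "card B = dim (UNIV::(real^'n) set)"
    using basis_card_eq_dim[OF _ B(2) ind] by simp
  then have "card B = card (UNIV::'n set)" by simp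
  then obtain f where f: "bij_betw f (UNIV::'n set) B"
    using finite_same_card_bij[OF _ B(1)] by (metis finite_class.finite_UNIV)
  have fB: "f j \<in> B" for j using f by (auto simp: bij_betw_def)
  have finj: "f j = f k \<Longrightarrow> j = k" for j k using f by (auto simp: bij_betw_def inj_on_def)
  define ev where "ev b = (SOME l. M *v b = l *\<^sub>R b)" for b
  have evp: "M *v f j = ev (f j) *\<^sub>R f j" for j
    unfolding ev_def using B(4) fB[of j] by (metis (mono_tags, lifting) someI_ex)
  have on: "f j \<bullet> f k = (if j = k then 1 else 0)" for j k
  proof (cases "j = k")
    case True
    then show ?thesis using B(4) fB[of j] by (simp add: norm_eq_sqrt_inner)
  next
    case False
    then have "f j \<noteq> f k" using finj by blast
    then show ?thesis using B(3) fB False unfolding pairwise_def orthogonal_def by auto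
  qed
  define Q :: "real^'n^'n" where "Q = (\<chi> i j. f j $ i)"
  define d :: "real^'n" where "d = (\<chi> j. ev (f j))"
  have QtQ: "transpose Q ** Q = mat 1"
    unfolding Q_def transpose_def matrix_matrix_mult_def mat_def
    using on by (simp add: vec_eq_iff inner_vec_def mult.commute)
  then have QQt: "Q ** transpose Q = mat 1" using matrix_left_right_inverse by blast
  have MQ: "M ** Q = Q ** diagm d"
  proof -
    have "(M ** Q) $ i $ j = (Q ** diagm d) $ i $ j" for i j
    proof -
      have "(M ** Q) $ i $ j = (M *v f j) $ i"
        by (simp add: Q_def matrix_matrix_mult_def matrix_vector_mult_def)
      also have "\<dots> = ev (f j) * f j $ i" by (simp add: evp)
      also have "\<dots> = (Q ** diagm d) $ i $ j"
        by (simp add: Q_def d_def diagm_def matrix_matrix_mult_def if_distrib cong: if_cong)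
      finally show ?thesis .
    qed
    then show ?thesis by (simp add: vec_eq_iff)
  qed
  have "M = M ** (Q ** transpose Q)" using QQt by simp
  also have "\<dots> = Q ** diagm d ** transpose Q" using MQ by (simp add: matrix_mul_assoc)
  finally have "M = Q ** diagm d ** transpose Q" .
  then show ?thesis using QtQ QQt by (intro exI[of _ Q] exI[of _ d]) simp
qed


declare transpose_matrix_vector[simp del]

lemma ifz_mult: "(if P then a else (0::real)) * b = (if P then a * b else 0)"
  "b * (if P then a else (0::real)) = (if P then b * a else 0)" by auto

definition orthm :: "real^'n^'n \<Rightarrow> bool" where
  "orthm Q \<longleftrightarrow> transpose Q ** Q = mat 1 \<and> Q ** transpose Q = mat 1"

lemma diagm_mv: "diagm d *v y = (\<chi> i. d$i * y$i)"
  by (simp add: diagm_def matrix_vector_mult_def vec_eq_iff ifz_mult)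

lemma diagm_mult: "diagm a ** diagm b = diagm (\<chi> i. a$i * b$i)"
  by (simp add: diagm_def matrix_matrix_mult_def vec_eq_iff ifz_mult)

lemma diagm_transpose: "transpose (diagm d) = diagm d"
  by (simp add: diagm_def transpose_def vec_eq_iff)

lemma diagm_one: "diagm (\<chi> i. 1) = mat 1"
  by (simp add: diagm_def mat_def vec_eq_iff)

lemma det_diagm: "det (diagm d) = (\<Prod>i\<in>UNIV. d$i)"
  by (subst det_diagonal) (auto simp: diagm_def)

lemma trace_diagm: "trace (diagm d) = (\<Sum>i\<in>UNIV. d$i)"
  by (simp add: trace_def diagm_def)

lemma orthm_det: "orthm Q \<Longrightarrow> det (Q ** diagm d ** transpose Q) = det (diagm d)"
proof -
  assume o: "orthm Q"
  have "det Q * det (transpose Q) = 1"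
    using o unfolding orthm_def by (metis det_I det_mul)
  then show ?thesis by (simp add: det_mul)
qed

lemma orthm_trace: "orthm Q \<Longrightarrow> trace (Q ** diagm d ** transpose Q) = trace (diagm d)"
proof -
  assume o: "orthm Q"
  have "trace (Q ** diagm d ** transpose Q) = trace (transpose Q ** (Q ** diagm d))"
    by (rule trace_mul_sym)
  also have "\<dots> = trace (diagm d)" using o unfolding orthm_def by (simp add: matrix_mul_assoc)
  finally show ?thesis .
qed

lemma orthm_transpose_sym: "transpose (Q ** diagm d ** transpose Q) = Q ** diagm d ** transpose Q"
  by (simp add: matrix_transpose_mul diagm_transpose matrix_mul_assoc)

lemma orthm_quad:
  "x \<bullet> ((Q ** diagm d ** transpose Q) *v x) = (\<Sum>i\<in>UNIV. d$i * ((transpose Q *v x)$i)^2)"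
proof -
  have "x \<bullet> ((Q ** diagm d ** transpose Q) *v x) = x \<bullet> (Q *v (diagm d *v (transpose Q *v x)))"
    by (simp add: matrix_vector_mul_assoc matrix_mul_assoc)
  also have "\<dots> = (transpose Q *v x) \<bullet> (diagm d *v (transpose Q *v x))"
    by (rule dot_mv_transpose)
  also have "\<dots> = (\<Sum>i\<in>UNIV. d$i * ((transpose Q *v x)$i)^2)"
    by (simp add: diagm_mv inner_vec_def power2_eq_square mult_ac)
  finally show ?thesis .
qed

lemma orthm_norm: "orthm Q \<Longrightarrow> (transpose Q *v x) \<bullet> (transpose Q *v x) = x \<bullet> x"
proof -
  assume o: "orthm Q"
  have "(transpose Q *v x) \<bullet> (transpose Q *v x) = x \<bullet> (Q *v (transpose Q *v x))"
    by (simp add: dot_mv_transpose)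
  also have "\<dots> = x \<bullet> x" using o by (simp add: orthm_def matrix_vector_mul_assoc)
  finally show ?thesis .
qed

lemma orthm_sumsq: "orthm Q \<Longrightarrow> (\<Sum>i\<in>UNIV. ((transpose Q *v x)$i)^2) = x \<bullet> x"
  using orthm_norm[of Q x] by (simp add: inner_vec_def power2_eq_square)

lemma spectral': "transpose (M::real^'n^'n) = M \<Longrightarrow> \<exists>Q d. orthm Q \<and> M = Q ** diagm d ** transpose Q"
  using spectral unfolding orthm_def by blast

lemma orthm_pd_eig:
  assumes o: "orthm Q" and pd: "pos_def (Q ** diagm d ** transpose Q)"
  shows "d$i > 0"
proof -
  define x where "x = Q *v axis i 1"
  have tx: "transpose Q *v x = axis i 1" using o by (simp add: x_def orthm_def matrix_vector_mul_assoc)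
  have "x \<noteq> 0"
  proof
    assume "x = 0"
    then have "axis i (1::real) = 0" using tx by simp
    then have "(axis i (1::real))$i = 0" by simp
    then show False by (simp add: axis_def)
  qed
  then have "x \<bullet> ((Q ** diagm d ** transpose Q) *v x) > 0" using pd pos_def_def by blast
  also have "x \<bullet> ((Q ** diagm d ** transpose Q) *v x) = d$i"
    unfolding orthm_quad tx by (simp add: axis_def power2_eq_square ifz_mult)
  finally show ?thesis .
qed

lemma orthm_pos_def:
  fixes Q :: "real^'n^'n"
  assumes o: "orthm Q" and dp: "\<And>i. d$i > 0"
  shows "pos_def (Q ** diagm d ** transpose Q)"
  unfolding pos_def_def
proof (intro conjI allI impI orthm_transpose_sym)
  fix x :: "real^'n" assume x: "x \<noteq> 0"
  have "transpose Q *v x \<noteq> 0"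
  proof
    assume "transpose Q *v x = 0"
    then have "Q *v (transpose Q *v x) = 0" by simp
    then show False using o x by (simp add: orthm_def matrix_vector_mul_assoc)
  qed
  then obtain i where i: "(transpose Q *v x)$i \<noteq> 0" by (auto simp: vec_eq_iff)
  have "0 < d$i * ((transpose Q *v x)$i)^2" using dp i by simp
  also have "\<dots> \<le> (\<Sum>j\<in>UNIV. d$j * ((transpose Q *v x)$j)^2)"
    by (rule member_le_sum) (auto intro: mult_nonneg_nonneg less_imp_le[OF dp])
  finally show "0 < x \<bullet> ((Q ** diagm d ** transpose Q) *v x)" unfolding orthm_quad .
qed

lemma spectral_pd: assumes "pos_def (M::real^'n^'n)"
  shows "\<exists>Q d. orthm Q \<and> M = Q ** diagm d ** transpose Q \<and> (\<forall>i. d$i > 0)"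
proof -
  obtain Q d where "orthm Q" "M = Q ** diagm d ** transpose Q"
    using spectral' assms pos_def_def by blast
  then show ?thesis using orthm_pd_eig assms by blast
qed

lemma pd_det_pos: assumes "pos_def (M::real^'n^'n)" shows "det M > 0"
proof -
  obtain Q d where "orthm Q" "M = Q ** diagm d ** transpose Q" "\<forall>i. d$i > 0"
    using spectral_pd assms by blast
  then show ?thesis by (simp add: orthm_det det_diagm prod_pos)
qed

lemma pd_lower: assumes "pos_def (M::real^'n^'n)"
  shows "\<exists>m>0. \<forall>x. m * (x \<bullet> x) \<le> x \<bullet> (M *v x)"
proof -
  obtain Q d where o: "orthm Q" and M: "M = Q ** diagm d ** transpose Q" and dp: "\<forall>i. d$i > 0"
    using spectral_pd assms by blast
  define m where "m = Min (range (\<lambda>i. d$i))"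
  have m0: "m > 0" unfolding m_def using dp by (subst Min_gr_iff) auto
  have mle: "m \<le> d$i" for i unfolding m_def by (rule Min_le) auto
  have "m * (x \<bullet> x) \<le> x \<bullet> (M *v x)" for x
  proof -
    have "m * (x \<bullet> x) = m * (\<Sum>i\<in>UNIV. ((transpose Q *v x)$i)^2)"
      using orthm_sumsq[OF o, of x] by simp
    also have "\<dots> = (\<Sum>i\<in>UNIV. m * ((transpose Q *v x)$i)^2)"
      by (simp add: sum_distrib_left)
    also have "\<dots> \<le> (\<Sum>i\<in>UNIV. d$i * ((transpose Q *v x)$i)^2)"
      by (intro sum_mono mult_right_mono mle) simp
    also have "\<dots> = x \<bullet> (M *v x)" unfolding M orthm_quad ..
    finally show ?thesis .
  qed
  then show ?thesis using m0 by blast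
qed

lemma pd_sqrt: assumes "pos_def (P::real^'n^'n)"
  shows "\<exists>R. pos_def R \<and> R ** R = P"
proof -
  obtain Q d where o: "orthm Q" and M: "P = Q ** diagm d ** transpose Q" and dp: "\<forall>i. d$i > 0"
    using spectral_pd assms by blast
  define s where "s = (\<chi> i. sqrt (d$i))"
  define R where "R = Q ** diagm s ** transpose Q"
  have "pos_def R" unfolding R_def by (rule orthm_pos_def[OF o]) (simp add: s_def dp)
  moreover have "R ** R = P"
  proof -
    have "R ** R = Q ** (diagm s ** (transpose Q ** Q) ** diagm s) ** transpose Q"
      by (simp add: R_def matrix_mul_assoc)
    also have "\<dots> = Q ** diagm (\<chi> i. s$i * s$i) ** transpose Q"
      using o by (simp add: orthm_def diagm_mult)
    also have "(\<chi> i. s$i * s$i) = d" using dp by (simp add: s_def vec_eq_iff less_imp_le)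
    finally show ?thesis using M by simp
  qed
  ultimately show ?thesis by blast
qed

lemma pd_sym: "pos_def P \<Longrightarrow> transpose P = P" by (simp add: pos_def_def)

lemma logdet_ineq:
  assumes X: "pos_def (X::real^'n^'n)" and P: "pos_def P"
  shows "ln (det X) \<le> ln (det P) + trace (matrix_inv P ** X) - real CARD('n)"
proof -
  obtain R where R: "pos_def R" "R ** R = P" using pd_sqrt P by blast
  have Ri: "invertible R" using R pos_def_invertible by blast
  define S where "S = matrix_inv R"
  have Ssym: "transpose S = S" unfolding S_def using minv_transpose[OF Ri] pd_sym[OF R(1)] by simp
  have SR: "S ** R = mat 1" "R ** S = mat 1" unfolding S_def using minv_left[OF Ri] minv_right[OF Ri] by auto
  define M where "M = S ** X ** S"
  have Msym: "transpose M = M" unfolding M_def using Ssym pd_sym[OF X]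
    by (simp add: matrix_transpose_mul matrix_mul_assoc)
  have "pos_def M" unfolding pos_def_def
  proof (intro conjI Msym allI impI)
    fix x :: "real^'n" assume x: "x \<noteq> 0"
    have "S *v x \<noteq> 0"
    proof
      assume "S *v x = 0"
      then have "R *v (S *v x) = 0" by simp
      then show False using x SR by (simp add: matrix_vector_mul_assoc)
    qed
    then have "(S *v x) \<bullet> (X *v (S *v x)) > 0" using X pos_def_def by blast
    also have "(S *v x) \<bullet> (X *v (S *v x)) = x \<bullet> (M *v x)"
    proof -
      have "x \<bullet> (M *v x) = x \<bullet> (S *v (X *v (S *v x)))"
        unfolding M_def by (simp add: matrix_vector_mul_assoc matrix_mul_assoc)
      also have "\<dots> = (transpose S *v x) \<bullet> (X *v (S *v x))" by (rule dot_mv_transpose)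
      finally show ?thesis using Ssym by simp
    qed
    finally show "x \<bullet> (M *v x) > 0" .
  qed
  then obtain Q d where o: "orthm Q" and Md: "M = Q ** diagm d ** transpose Q" and dp: "\<forall>i. d$i > 0"
    using spectral_pd by blast
  have detSR: "det S * det R = 1" using SR by (metis det_I det_mul)
  have "det X = det P * det M"
  proof -
    have "det M = det S * det X * det S" by (simp add: M_def det_mul)
    moreover have "det P = det R * det R" using R(2) by (metis det_mul)
    ultimately have "det P * det M = (det S * det R) * (det S * det R) * det X" by (simp add: mult_ac)
    then show ?thesis using detSR by simp
  qed
  have detM: "det M = (\<Prod>i\<in>UNIV. d$i)" using o by (simp add: Md orthm_det det_diagm)
  have trM: "trace M = (\<Sum>i\<in>UNIV. d$i)" using o by (simp add: Md orthm_trace trace_diagm)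
  have "trace M = trace (S ** S ** X)"
    unfolding M_def using trace_mul_sym[of "S ** X" S] by (simp add: matrix_mul_assoc)
  also have "S ** S = matrix_inv P"
    unfolding S_def R(2)[symmetric] using minv_mult[OF Ri Ri] by simp
  finally have trM2: "trace M = trace (matrix_inv P ** X)" .
  have dPpos: "det P > 0" using pd_det_pos[OF P] .
  have dMpos: "det M > 0" using pd_det_pos[OF \<open>pos_def M\<close>] .
  have "ln (det X) = ln (det P) + ln (det M)" using \<open>det X = det P * det M\<close> dPpos dMpos
    by (simp add: ln_mult)
  also have "ln (det M) = (\<Sum>i\<in>UNIV. ln (d$i))" unfolding detM using dp
    by (subst ln_prod) (auto simp: less_imp_neq[symmetric])
  also have "\<dots> \<le> (\<Sum>i\<in>UNIV. d$i - 1)" using dp by (intro sum_mono ln_le_minus_one) auto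
  also have "\<dots> = trace M - real CARD('n)" by (simp add: trM sum_subtractf)
  finally show ?thesis using trM2 by simp
qed

lemma tr_WEWE: assumes W: "pos_def (W::real^'n^'n)" and E: "transpose E = E"
  shows "0 \<le> trace (W ** E ** W ** E)"
proof -
  obtain R where R: "pos_def R" "R ** R = W" using pd_sqrt W by blast
  have Rs: "transpose R = R" using R pd_sym by blast
  define K where "K = R ** E ** R"
  have Ks: "transpose K = K" unfolding K_def using Rs E by (simp add: matrix_transpose_mul matrix_mul_assoc)
  have "trace (W ** E ** W ** E) = trace (R ** (R ** E ** R ** R ** E))"
    unfolding R(2)[symmetric] by (simp add: matrix_mul_assoc)
  also have "\<dots> = trace ((R ** E ** R ** R ** E) ** R)" by (rule trace_mul_sym)
  also have "\<dots> = trace (transpose K ** K)" unfolding Ks unfolding K_def by (simp add: matrix_mul_assoc)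
  also have "\<dots> = K \<bullet> K" by (rule trace_ttD)
  finally show ?thesis by simp
qed

lemma row_quad: "(D ** W ** transpose D) $ k $ k = (D$k) \<bullet> (W *v (D$k))"
proof -
  have "(D ** W ** transpose D) $ k $ k = (\<Sum>j\<in>UNIV. (\<Sum>i\<in>UNIV. D$k$i * W$i$j) * D$k$j)"
    by (simp add: matrix_matrix_mult_def transpose_def)
  also have "\<dots> = (\<Sum>j\<in>UNIV. \<Sum>i\<in>UNIV. D$k$i * W$i$j * D$k$j)"
    by (simp add: sum_distrib_right)
  also have "\<dots> = (\<Sum>i\<in>UNIV. \<Sum>j\<in>UNIV. D$k$i * W$i$j * D$k$j)" by (rule sum.swap)
  also have "\<dots> = (D$k) \<bullet> (W *v (D$k))"
    by (simp add: inner_vec_def matrix_vector_mult_def sum_distrib_left mult_ac)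
  finally show ?thesis .
qed

lemma tr_WDD: assumes W: "pos_def (W::real^'n^'n)"
  shows "0 \<le> trace (W ** (transpose D ** D))"
    and "trace (W ** (transpose D ** (D::real^'n^'m))) = 0 \<Longrightarrow> D = 0"
proof -
  have eq: "trace (W ** (transpose D ** D)) = (\<Sum>k\<in>UNIV. (D$k) \<bullet> (W *v (D$k)))"
  proof -
    have "trace (W ** (transpose D ** D)) = trace ((W ** transpose D) ** D)"
      by (simp add: matrix_mul_assoc)
    also have "\<dots> = trace (D ** (W ** transpose D))" by (rule trace_mul_sym)
    also have "\<dots> = (\<Sum>k\<in>UNIV. (D$k) \<bullet> (W *v (D$k)))"
      unfolding trace_def by (simp add: row_quad matrix_mul_assoc)
    finally show ?thesis .
  qed
  have nn: "0 \<le> (D$k) \<bullet> (W *v (D$k))" for k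
    using W unfolding pos_def_def by (cases "D$k = 0") (auto intro: less_imp_le)
  show "0 \<le> trace (W ** (transpose D ** D))" unfolding eq by (intro sum_nonneg nn)
  assume z: "trace (W ** (transpose D ** D)) = 0"
  have "\<forall>k\<in>UNIV. (D$k) \<bullet> (W *v (D$k)) = 0"
    using z unfolding eq by (subst sum_nonneg_eq_0_iff[symmetric]) (auto intro: nn)
  then have "D$k = 0" for k using W unfolding pos_def_def by (metis UNIV_I less_irrefl)
  then show "D = 0" by (simp add: vec_eq_iff)
qed


declare transpose_matrix_vector[simp del]

lemma mm_add_r: "((A::real^'n^'m) + B) ** C = A ** C + B ** C"
  by (simp add: matrix_matrix_mult_def vec_eq_iff sum.distrib distrib_right)
lemma mm_diff_r: "((A::real^'n^'m) - B) ** C = A ** C - B ** C"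
  by (simp add: matrix_matrix_mult_def vec_eq_iff sum_subtractf left_diff_distrib)
lemma mm_diff_l: "(A::real^'n^'m) ** (B - C) = A ** B - A ** C"
  by (simp add: matrix_matrix_mult_def vec_eq_iff sum_subtractf right_diff_distrib)
lemma mm_add_l: "(A::real^'n^'m) ** (B + C) = A ** B + A ** C"
  by (rule matrix_add_ldistrib)

lemma trace_add': "trace ((A::real^'n^'n) + B) = trace A + trace B" by (rule trace_add)
lemma trace_sub': "trace ((A::real^'n^'n) - B) = trace A - trace B" by (rule trace_sub)

lemma trace_transpose_eq: "trace (A::real^'n^'n) = trace (transpose A)" by (simp add: trace_transpose')

lemma feasible_pd: "feasible S \<Longrightarrow> pos_def (mat 1 - transpose S ** S)"
  by (simp add: feasible_def)

lemma global_opt: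
  fixes B S T :: "real^'d2^'d1"
  assumes eps: "eps > 0" and fS: "feasible S" and crit: "B = eps *\<^sub>R (S ** matrix_inv (mat 1 - transpose S ** S))"
    and fT: "feasible T"
  shows "objective eps B T \<le> objective eps B S
     - eps / 2 * trace (matrix_inv (mat 1 - transpose S ** S) ** (transpose (T - S) ** (T - S)))"
proof -
  define P where "P = mat 1 - transpose S ** S"
  define X where "X = mat 1 - transpose T ** T"
  define Pi where "Pi = matrix_inv P"
  have PP: "pos_def P" using fS by (simp add: feasible_def P_def)
  have XP: "pos_def X" using fT by (simp add: feasible_def X_def)
  have Pinv: "invertible P" using PP pos_def_invertible by blast
  have Pis: "transpose Pi = Pi" using pos_def_minv[OF PP] by (simp add: Pi_def pos_def_def)
  have PiP: "Pi ** P = mat 1" using minv_left[OF Pinv] by (simp add: Pi_def)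
  have ld: "ln (det X) \<le> ln (det P) + trace (Pi ** X) - real CARD('d2)"
    using logdet_ineq[OF XP PP] by (simp add: Pi_def)
  have t1: "trace (Pi ** X) - real CARD('d2) = trace (Pi ** (transpose S ** S)) - trace (Pi ** (transpose T ** T))"
  proof -
    have "real CARD('d2) = trace (Pi ** P)" using PiP by (simp add: trace_I)
    moreover have "Pi ** X - Pi ** P = Pi ** (transpose S ** S) - Pi ** (transpose T ** T)"
      by (simp add: X_def P_def mm_diff_l)
    ultimately show ?thesis by (metis trace_sub')
  qed
  have BT: "transpose B = eps *\<^sub>R (Pi ** transpose S)"
    using crit Pis by (simp add: Pi_def P_def transpose_smult matrix_transpose_mul)
  have fr: "frob B U = eps * trace (Pi ** (transpose S ** U))" for U
    unfolding frob_def BT by (simp add: smult_mm_left trace_smult matrix_mul_assoc)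
  have cross: "trace (Pi ** (transpose T ** S)) = trace (Pi ** (transpose S ** T))"
  proof -
    have "trace (Pi ** (transpose T ** S)) = trace (transpose (Pi ** (transpose T ** S)))"
      by (rule trace_transpose_eq)
    also have "\<dots> = trace (transpose S ** T ** Pi)"
      using Pis by (simp add: matrix_transpose_mul matrix_mul_assoc)
    also have "\<dots> = trace (Pi ** (transpose S ** T))" by (rule trace_mul_sym)
    finally show ?thesis .
  qed
  have DD: "trace (Pi ** (transpose (T - S) ** (T - S))) =
      trace (Pi ** (transpose T ** T)) - 2 * trace (Pi ** (transpose S ** T)) + trace (Pi ** (transpose S ** S))"
  proof -
    have "Pi ** (transpose (T - S) ** (T - S)) =
        Pi ** (transpose T ** T) - Pi ** (transpose T ** S) - Pi ** (transpose S ** T) + Pi ** (transpose S ** S)"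
      by (simp add: transpose_diff' mm_diff_l mm_diff_r mm_add_l algebra_simps)
    then show ?thesis using cross by (simp add: trace_add' trace_sub')
  qed
  have "objective eps B T = eps * trace (Pi ** (transpose S ** T)) + eps / 2 * ln (det X)"
    by (simp add: objective_def fr X_def)
  also have "\<dots> \<le> eps * trace (Pi ** (transpose S ** T)) + eps / 2 * (ln (det P) + trace (Pi ** X) - real CARD('d2))"
    using ld eps by (intro add_left_mono mult_left_mono) auto
  also have "\<dots> = objective eps B S - eps / 2 * trace (Pi ** (transpose (T - S) ** (T - S)))"
    unfolding DD objective_def fr P_def[symmetric]
    using arg_cong[OF t1, of "\<lambda>z. eps / 2 * z"] by (simp add: algebra_simps)
  finally show ?thesis by (simp add: Pi_def P_def)
qed

lemma scalar_id: assumes t: "t \<ge> (0::real)"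
  shows "1 - (2 / (1 + sqrt (1 + 4*t)))^2 * t = 2 / (1 + sqrt (1 + 4*t))"
proof -
  define s where "s = sqrt (1 + 4*t)"
  have s1: "s \<ge> 1" using t by (simp add: s_def)
  have ss: "s^2 = 1 + 4*t" using t by (simp add: s_def)
  have pos: "1 + s > 0" using s1 by simp
  have e1: "4*t = (s-1)*(s+1)" using ss by (simp add: power2_eq_square algebra_simps)
  have "(2 / (1 + s))^2 * t = (4*t) / ((1+s)*(1+s))" by (simp add: power2_eq_square)
  also have "\<dots> = (s-1)/(1+s)" unfolding e1 using pos by (simp add: add.commute)
  finally have a: "(2 / (1 + s))^2 * t = (s-1)/(1+s)" .
  have b: "1 - 2/(1+s) = (s-1)/(1+s)" using pos by (simp add: field_simps)
  show ?thesis using a b by (simp add: s_def)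
qed

lemma diagm_lin: "diagm a - c *\<^sub>R diagm b = diagm (\<chi> i. a$i - c * b$i)"
  by (simp add: diagm_def vec_eq_iff)

lemma orthm_eigval: "orthm Q \<Longrightarrow> (Q *v axis i 1) \<bullet> ((Q ** diagm d ** transpose Q) *v (Q *v axis i 1)) = d$i"
proof -
  assume o: "orthm Q"
  have tx: "transpose Q *v (Q *v axis i 1) = axis i 1" using o
    by (simp add: orthm_def matrix_vector_mul_assoc)
  show ?thesis unfolding orthm_quad tx by (simp add: axis_def power2_eq_square ifz_mult)
qed

lemma exists_crit:
  fixes A :: "real^'d2^'d1"
  assumes eps: "eps > 0"
  shows "\<exists>S. feasible S \<and> A = eps *\<^sub>R (S ** matrix_inv (mat 1 - transpose S ** S))"
proof -
  define K where "K = transpose A ** A"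
  have Ks: "transpose K = K" by (simp add: K_def matrix_transpose_mul)
  obtain Q d where o: "orthm Q" and Kd: "K = Q ** diagm d ** transpose Q" using spectral'[OF Ks] by blast
  have d0: "d$i \<ge> 0" for i
  proof -
    define x where "x = Q *v axis i 1"
    have "x \<bullet> (K *v x) = (A *v x) \<bullet> (A *v x)"
      by (simp add: K_def dot_mv_transpose matrix_vector_mul_assoc[symmetric])
    then have "x \<bullet> (K *v x) \<ge> 0" by simp
    then show ?thesis using orthm_eigval[OF o, of i d] Kd x_def by simp
  qed
  define p where "p = (\<chi> i. 2 / (1 + sqrt (1 + 4 * (d$i / eps^2))))"
  have pp: "p$i > 0" for i
  proof -
    have "sqrt (1 + 4 * (d$i / eps^2)) \<ge> 0" using d0[of i] eps by simp
    then show ?thesis by (simp add: p_def add_pos_nonneg)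
  qed
  define P where "P = Q ** diagm p ** transpose Q"
  have PP: "pos_def P" unfolding P_def using orthm_pos_def[OF o pp] .
  have Ps: "transpose P = P" using PP pd_sym by blast
  define S where "S = (1/eps) *\<^sub>R (A ** P)"
  have StS: "transpose S ** S = (1/eps^2) *\<^sub>R (Q ** diagm (\<chi> i. p$i * d$i * p$i) ** transpose Q)"
  proof -
    have "transpose S ** S = (1/eps^2) *\<^sub>R (P ** K ** P)"
      by (simp add: S_def transpose_smult smult_mm_left smult_mm_right matrix_transpose_mul Ps K_def
          matrix_mul_assoc power2_eq_square)
    also have "P ** K ** P = Q ** (diagm p ** (transpose Q ** Q) ** diagm d ** (transpose Q ** Q) ** diagm p) ** transpose Q"
      by (simp add: P_def Kd matrix_mul_assoc)
    also have "\<dots> = Q ** diagm (\<chi> i. p$i * d$i * p$i) ** transpose Q"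
      using o by (simp add: orthm_def diagm_mult)
    finally show ?thesis .
  qed
  have I: "mat 1 = Q ** diagm (\<chi> i. 1) ** transpose Q"
    using o by (simp add: orthm_def diagm_one)
  have "mat 1 - transpose S ** S = Q ** (diagm (\<chi> i. 1) - (1/eps^2) *\<^sub>R diagm (\<chi> i. p$i * d$i * p$i)) ** transpose Q"
    unfolding StS by (subst I) (simp add: mm_diff_l mm_diff_r smult_mm_left smult_mm_right)
  also have "diagm (\<chi> i. 1) - (1/eps^2) *\<^sub>R diagm (\<chi> i. p$i * d$i * p$i) = diagm p"
  proof -
    have "1 - 1/eps^2 * (p$i * d$i * p$i) = p$i" for i
    proof -
      have "1 - 1/eps^2 * (p$i * d$i * p$i) = 1 - (p$i)^2 * (d$i / eps^2)"
        by (simp add: power2_eq_square field_simps)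
      also have "\<dots> = p$i" unfolding p_def using scalar_id[of "d$i/eps^2"] d0[of i] eps by simp
      finally show ?thesis .
    qed
    then show ?thesis unfolding diagm_lin by (simp add: vec_eq_iff)
  qed
  finally have IS: "mat 1 - transpose S ** S = P" by (simp add: P_def)
  have Pinv: "invertible P" using PP pos_def_invertible by blast
  have "eps *\<^sub>R (S ** matrix_inv (mat 1 - transpose S ** S)) = A ** (P ** matrix_inv P)"
    unfolding IS using eps by (simp add: S_def smult_mm_left matrix_mul_assoc)
  also have "\<dots> = A" using minv_right[OF Pinv] by simp
  finally show ?thesis using IS PP by (intro exI[of _ S]) (simp add: feasible_def)
qed

lemma max_is_crit:
  fixes A S :: "real^'d2^'d1"
  assumes eps: "eps > 0" and fS: "feasible S"
    and mx: "\<forall>S'. feasible S' \<longrightarrow> objective eps A S' \<le> objective eps A S"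
  shows "A = eps *\<^sub>R (S ** matrix_inv (mat 1 - transpose S ** S))"
proof -
  obtain S0 where f0: "feasible S0" and c0: "A = eps *\<^sub>R (S0 ** matrix_inv (mat 1 - transpose S0 ** S0))"
    using exists_crit[OF eps] by blast
  define W where "W = matrix_inv (mat 1 - transpose S0 ** S0)"
  have W: "pos_def W" unfolding W_def using pos_def_minv f0 feasible_def by blast
  have "objective eps A S \<le> objective eps A S0 - eps / 2 * trace (W ** (transpose (S - S0) ** (S - S0)))"
    using global_opt[OF eps f0 c0 fS] by (simp add: W_def)
  moreover have "objective eps A S0 \<le> objective eps A S" using mx f0 by blast
  ultimately have "eps / 2 * trace (W ** (transpose (S - S0) ** (S - S0))) \<le> 0" by simp
  then have "trace (W ** (transpose (S - S0) ** (S - S0))) \<le> 0" using eps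
    by (simp add: mult_le_0_iff)
  then have "trace (W ** (transpose (S - S0) ** (S - S0))) = 0" using tr_WDD(1)[OF W, of "S - S0"] by simp
  then have "S - S0 = 0" using tr_WDD(2)[OF W] by blast
  then show ?thesis using c0 by simp
qed

lemma crit_is_max:
  fixes B S :: "real^'d2^'d1"
  assumes eps: "eps > 0" and fS: "feasible S" and crit: "B = eps *\<^sub>R (S ** matrix_inv (mat 1 - transpose S ** S))"
  shows "Wt eps B = objective eps B S" and "feasible T \<Longrightarrow> objective eps B T \<le> objective eps B S"
proof -
  define W where "W = matrix_inv (mat 1 - transpose S ** S)"
  have W: "pos_def W" unfolding W_def using pos_def_minv fS feasible_def by blast
  show le: "objective eps B T \<le> objective eps B S" if "feasible T" for T
  proof -
    have "objective eps B T \<le> objective eps B S - eps / 2 * trace (W ** (transpose (T - S) ** (T - S)))"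
      using global_opt[OF eps fS crit that] by (simp add: W_def)
    moreover have "0 \<le> eps / 2 * trace (W ** (transpose (T - S) ** (T - S)))"
      using tr_WDD(1)[OF W, of "T - S"] eps by simp
    ultimately show ?thesis by simp
  qed
  show "Wt eps B = objective eps B S"
    unfolding Wt_def
    by (rule cSup_eq_maximum) (use fS le in auto)
qed


declare transpose_matrix_vector[simp del]

lemma norm_sq_vec: "(norm (v::real^'n))^2 = (\<Sum>i\<in>UNIV. (v$i)^2)"
  unfolding power2_norm_eq_inner by (simp add: inner_vec_def power2_eq_square)

lemma norm_sq_mat: "(norm (A::real^'n^'m))^2 = (\<Sum>i\<in>UNIV. (norm (A$i))^2)"
  unfolding power2_norm_eq_inner by (simp add: inner_vec_def)

lemma mv_norm: "norm ((A::real^'n^'m) *v x) \<le> norm A * norm x"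
proof -
  have c: "((A *v x)$i)^2 \<le> (norm (A$i))^2 * (norm x)^2" for i
  proof -
    have "\<bar>(A *v x)$i\<bar> \<le> norm (A$i) * norm x"
      by (simp add: matrix_mult_dot Cauchy_Schwarz_ineq2)
    then have "\<bar>(A *v x)$i\<bar>^2 \<le> (norm (A$i) * norm x)^2"
      by (intro power_mono) auto
    then show ?thesis by (simp add: power_mult_distrib)
  qed
  have "(norm (A *v x))^2 = (\<Sum>i\<in>UNIV. ((A *v x)$i)^2)" by (rule norm_sq_vec)
  also have "\<dots> \<le> (\<Sum>i\<in>UNIV. (norm (A$i))^2 * (norm x)^2)" by (intro sum_mono c)
  also have "\<dots> = (norm A)^2 * (norm x)^2" by (simp add: norm_sq_mat[of A] sum_distrib_right)
  also have "\<dots> = (norm A * norm x)^2" by (simp add: power_mult_distrib)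
  finally have "(norm (A *v x))^2 \<le> (norm A * norm x)^2" .
  then show ?thesis by (rule power2_le_imp_le) simp
qed

lemma norm_transpose: "norm (transpose (A::real^'n^'m)) = norm A"
proof -
  have "transpose A \<bullet> transpose A = A \<bullet> A"
  proof -
    have "transpose A \<bullet> transpose A = (\<Sum>j\<in>UNIV. \<Sum>i\<in>UNIV. A$i$j * A$i$j)"
      by (simp add: inner_vec_def transpose_def)
    also have "\<dots> = (\<Sum>i\<in>UNIV. \<Sum>j\<in>UNIV. A$i$j * A$i$j)" by (rule sum.swap)
    also have "\<dots> = A \<bullet> A" by (simp add: inner_vec_def)
    finally show ?thesis .
  qed
  then show ?thesis by (simp add: norm_eq_sqrt_inner)
qed

lemma row_mm: "((A::real^'n^'m) ** (B::real^'k^'n)) $ i = transpose B *v (A $ i)"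
  by (auto simp: matrix_matrix_mult_def matrix_vector_mult_def transpose_def vec_eq_iff mult.commute intro!: sum.cong)

lemma mm_norm: "norm ((A::real^'n^'m) ** (B::real^'k^'n)) \<le> norm A * norm B"
proof -
  have c: "(norm ((A ** B)$i))^2 \<le> (norm (A$i))^2 * (norm B)^2" for i
  proof -
    have "norm ((A ** B)$i) \<le> norm B * norm (A$i)"
      unfolding row_mm using mv_norm[of "transpose B" "A$i"] by (simp add: norm_transpose)
    then have "(norm ((A ** B)$i))^2 \<le> (norm B * norm (A$i))^2" by (intro power_mono) auto
    then show ?thesis by (simp add: power_mult_distrib mult.commute)
  qed
  have "(norm (A ** B))^2 = (\<Sum>i\<in>UNIV. (norm ((A ** B)$i))^2)" by (rule norm_sq_mat)
  also have "\<dots> \<le> (\<Sum>i\<in>UNIV. (norm (A$i))^2 * (norm B)^2)" by (intro sum_mono c)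
  also have "\<dots> = (norm A)^2 * (norm B)^2" by (simp add: norm_sq_mat[of A] sum_distrib_right)
  also have "\<dots> = (norm A * norm B)^2" by (simp add: power_mult_distrib)
  finally have "(norm (A ** B))^2 \<le> (norm A * norm B)^2" .
  then show ?thesis by (rule power2_le_imp_le) simp
qed

lemma mat_norm_from_op:
  assumes "\<And>u. norm ((M::real^'n^'m) *v u) \<le> c * norm u"
  shows "norm M \<le> real CARD('m) * real CARD('n) * c"
proof -
  have e: "\<bar>M$i$j\<bar> \<le> c" for i j
  proof -
    have "M$i$j = (M *v axis j 1)$i"
      by (simp add: matrix_vector_mult_def axis_def ifz_mult)
    then have "\<bar>M$i$j\<bar> \<le> norm (M *v axis j 1)" using component_le_norm_cart by metis
    also have "\<dots> \<le> c * norm (axis j (1::real))" by (rule assms)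
    also have "\<dots> = c" by simp
    finally show ?thesis .
  qed
  have "norm M \<le> (\<Sum>i\<in>UNIV. norm (M$i))" unfolding norm_vec_def by (rule L2_set_le_sum) simp
  also have "\<dots> \<le> (\<Sum>i\<in>UNIV. \<Sum>j\<in>UNIV. \<bar>M$i$j\<bar>)" by (intro sum_mono norm_le_l1_cart)
  also have "\<dots> \<le> (\<Sum>i\<in>(UNIV::'m set). \<Sum>j\<in>(UNIV::'n set). c)" by (intro sum_mono e)
  also have "\<dots> = real CARD('m) * real CARD('n) * c" by simp
  finally show ?thesis .
qed

lemma minv_local:
  fixes Y :: "real^'n^'n"
  assumes Y: "invertible Y"
  shows "\<exists>d>0. \<exists>K. \<forall>X. norm (X - Y) < d \<longrightarrow> invertible X \<and> norm (matrix_inv X - matrix_inv Y) \<le> K * norm (X - Y)"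
proof -
  define Yi where "Yi = matrix_inv Y"
  define C where "C = norm Yi + 1"
  have C0: "C > 0" by (simp add: C_def add_nonneg_pos)
  have lowY: "norm v \<le> C * norm (Y *v v)" for v
  proof -
    have "norm v = norm (Yi *v (Y *v v))" using minv_left[OF Y]
      by (simp add: Yi_def matrix_vector_mul_assoc)
    also have "\<dots> \<le> norm Yi * norm (Y *v v)" by (rule mv_norm)
    also have "\<dots> \<le> C * norm (Y *v v)" by (simp add: C_def mult_right_mono)
    finally show ?thesis .
  qed
  define d where "d = 1 / (2 * C)"
  have d0: "d > 0" using C0 by (simp add: d_def)
  define K where "K = real CARD('n) * real CARD('n) * (2 * C * norm Yi)"
  have "invertible X \<and> norm (matrix_inv X - Yi) \<le> K * norm (X - Y)" if X: "norm (X - Y) < d" for X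
  proof -
    have lowX: "norm v \<le> 2 * C * norm (X *v v)" for v
    proof -
      have "norm ((X - Y) *v v) \<le> norm (X - Y) * norm v" by (rule mv_norm)
      also have "\<dots> \<le> d * norm v" using X by (intro mult_right_mono) auto
      finally have a: "norm ((X - Y) *v v) \<le> d * norm v" .
      have "Y *v v = X *v v - (X - Y) *v v" by (simp add: matrix_vector_mult_diff_rdistrib)
      then have "norm (Y *v v) \<le> norm (X *v v) + norm ((X - Y) *v v)"
        by (metis norm_triangle_ineq4)
      then have "C * norm (Y *v v) \<le> C * norm (X *v v) + C * (d * norm v)"
        using a C0 by (smt (verit) mult_left_mono distrib_left)
      moreover have "C * (d * norm v) = norm v / 2" using C0 by (simp add: d_def)
      ultimately show ?thesis using lowY[of v] by linarith
    qed
    have "X *v v = 0 \<Longrightarrow> v = 0" for v using lowX[of v] by simp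
    then have Xi: "invertible X" using matrix_left_invertible_ker invertible_left_inverse by blast
    define Xi' where "Xi' = matrix_inv X"
    have bX: "norm (Xi' *v w) \<le> 2 * C * norm w" for w
      using lowX[of "Xi' *v w"] minv_right[OF Xi] by (simp add: Xi'_def matrix_vector_mul_assoc)
    have eq: "Xi' - Yi = Xi' ** (Y - X) ** Yi"
    proof -
      have "Xi' ** (Y - X) ** Yi = Xi' ** (Y ** Yi) - (Xi' ** X) ** Yi"
        by (simp add: mm_diff_l mm_diff_r matrix_mul_assoc)
      also have "\<dots> = Xi' - Yi" using minv_right[OF Y] minv_left[OF Xi] by (simp add: Xi'_def Yi_def)
      finally show ?thesis by simp
    qed
    have "norm ((Xi' - Yi) *v u) \<le> (2 * C * norm Yi * norm (X - Y)) * norm u" for u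
    proof -
      have "(Xi' - Yi) *v u = Xi' *v ((Y - X) *v (Yi *v u))" unfolding eq by (simp add: matrix_vector_mul_assoc matrix_mul_assoc)
      then have "norm ((Xi' - Yi) *v u) \<le> 2 * C * norm ((Y - X) *v (Yi *v u))" using bX by simp
      also have "\<dots> \<le> 2 * C * (norm (Y - X) * (norm Yi * norm u))"
      proof -
        have "norm ((Y - X) *v (Yi *v u)) \<le> norm (Y - X) * (norm Yi * norm u)"
          using mv_norm[of "Y - X" "Yi *v u"] mv_norm[of Yi u]
          by (meson mult_left_mono norm_ge_zero order_trans)
        then show ?thesis using C0 by (intro mult_left_mono) auto
      qed
      finally show ?thesis by (simp add: norm_minus_commute mult_ac)
    qed
    then have "norm (Xi' - Yi) \<le> real CARD('n) * real CARD('n) * (2 * C * norm Yi * norm (X - Y))"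
      by (rule mat_norm_from_op)
    then show ?thesis using Xi by (simp add: K_def Xi'_def mult_ac)
  qed
  then show ?thesis using d0 unfolding Yi_def by blast
qed

lemma minv_isCont: "invertible (Y::real^'n^'n) \<Longrightarrow> isCont matrix_inv Y"
proof -
  assume Y: "invertible Y"
  obtain d K where d: "d > 0" and dK: "\<And>X. norm (X - Y) < d \<Longrightarrow> invertible X \<and> norm (matrix_inv X - matrix_inv Y) \<le> K * norm (X - Y)"
    using minv_local[OF Y] by blast
  define K' where "K' = \<bar>K\<bar> + 1"
  have K'0: "K' > 0" by (simp add: K'_def)
  show ?thesis unfolding continuous_at_eps_delta
  proof (intro allI impI)
    fix e :: real assume e: "e > 0"
    show "\<exists>d>0. \<forall>x'. dist x' Y < d \<longrightarrow> dist (matrix_inv x') (matrix_inv Y) < e"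
    proof (intro exI[of _ "min d (e / K')"] conjI allI impI)
      show "min d (e / K') > 0" using d e K'0 by simp
      fix X assume X: "dist X Y < min d (e / K')"
      then have "norm (matrix_inv X - matrix_inv Y) \<le> K * norm (X - Y)" using dK by (simp add: dist_norm)
      also have "\<dots> \<le> K' * norm (X - Y)" by (simp add: K'_def mult_right_mono)
      also have "\<dots> < K' * (e / K')" using X K'0 by (intro mult_strict_left_mono) (auto simp: dist_norm)
      also have "\<dots> = e" using K'0 by simp
      finally show "dist (matrix_inv X) (matrix_inv Y) < e" by (simp add: dist_norm)
    qed
  qed
qed

lemma minv_eventually_invertible: "invertible (Y::real^'n^'n) \<Longrightarrow> \<exists>d>0. \<forall>X. norm (X - Y) < d \<longrightarrow> invertible X"
  using minv_local by blast

lemma linear_sandwich: "linear (\<lambda>H. (A::real^'n^'m) ** (H::real^'k^'n) ** (B::real^'l^'k))"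
  by (rule linearI) (simp_all add: mm_add_l mm_add_r smult_mm_left smult_mm_right)

lemma bl_sandwich: "bounded_linear (\<lambda>H. (A::real^'n^'m) ** (H::real^'k^'n) ** (B::real^'l^'k))"
  using linear_sandwich linear_conv_bounded_linear by blast

lemma minv_deriv:
  fixes Y :: "real^'n^'n"
  assumes Y: "invertible Y"
  shows "(matrix_inv has_derivative (\<lambda>H. - (matrix_inv Y ** H ** matrix_inv Y))) (at Y)"
  unfolding has_derivative_at_alt
proof (intro conjI allI impI)
  show "bounded_linear (\<lambda>H. - (matrix_inv Y ** H ** matrix_inv Y))"
    using bounded_linear_minus[OF bl_sandwich] .
  fix e :: real assume e: "e > 0"
  obtain d K where d: "d > 0" and dK: "\<And>X. norm (X - Y) < d \<Longrightarrow> invertible X \<and> norm (matrix_inv X - matrix_inv Y) \<le> K * norm (X - Y)"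
    using minv_local[OF Y] by blast
  define Yi where "Yi = matrix_inv Y"
  define K' where "K' = (\<bar>K\<bar> + 1) * (norm Yi + 1)"
  have K'0: "K' > 0" unfolding K'_def using norm_ge_zero[of Yi] by (intro mult_pos_pos) linarith+
  show "\<exists>d>0. \<forall>y. norm (y - Y) < d \<longrightarrow>
     norm (matrix_inv y - matrix_inv Y - - (matrix_inv Y ** (y - Y) ** matrix_inv Y)) \<le> e * norm (y - Y)"
  proof (intro exI[of _ "min d (e / K')"] conjI allI impI)
    show "min d (e / K') > 0" using d e K'0 by simp
    fix X assume X: "norm (X - Y) < min d (e / K')"
    obtain Xi: "invertible X" and nb: "norm (matrix_inv X - Yi) \<le> K * norm (X - Y)"
      using dK X unfolding Yi_def by auto
    define Xi' where "Xi' = matrix_inv X"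
    have eq: "Xi' - Yi + Yi ** (X - Y) ** Yi = (Yi - Xi') ** (X - Y) ** Yi"
    proof -
      have a: "Xi' - Yi = Xi' ** (Y - X) ** Yi"
      proof -
        have "Xi' ** (Y - X) ** Yi = Xi' ** (Y ** Yi) - (Xi' ** X) ** Yi"
          by (simp add: mm_diff_l mm_diff_r matrix_mul_assoc)
        also have "\<dots> = Xi' - Yi" using minv_right[OF Y] minv_left[OF Xi] by (simp add: Xi'_def Yi_def)
        finally show ?thesis by simp
      qed
      have "(Yi - Xi') ** (X - Y) ** Yi = Yi ** (X - Y) ** Yi - Xi' ** (X - Y) ** Yi"
        by (simp add: mm_diff_r)
      also have "Xi' ** (X - Y) ** Yi = - (Xi' ** (Y - X) ** Yi)"
        by (simp add: mm_diff_l mm_diff_r)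
      finally show ?thesis unfolding a by simp
    qed
    have "norm (Xi' - Yi + Yi ** (X - Y) ** Yi) \<le> norm (Yi - Xi') * norm (X - Y) * norm Yi"
      unfolding eq using mm_norm[of "(Yi - Xi') ** (X - Y)" Yi] mm_norm[of "Yi - Xi'" "X - Y"]
      by (meson mult_right_mono norm_ge_zero order_trans)
    also have "\<dots> \<le> (K * norm (X - Y)) * norm (X - Y) * norm Yi"
      using nb by (simp add: norm_minus_commute Xi'_def mult_right_mono)
    also have "\<dots> \<le> K' * norm (X - Y) * norm (X - Y)"
    proof -
      have "K * norm Yi \<le> K'" unfolding K'_def
        by (smt (verit) abs_ge_self mult_mono norm_ge_zero mult_nonneg_nonneg)
      then have "(K * norm Yi) * (norm (X - Y) * norm (X - Y)) \<le> K' * (norm (X - Y) * norm (X - Y))"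
        by (intro mult_right_mono) auto
      then show ?thesis by (simp add: mult_ac)
    qed
    also have "\<dots> \<le> e * norm (X - Y)"
    proof -
      have "K' * norm (X - Y) \<le> e" using X K'0 by (simp add: field_simps)
      then show ?thesis by (intro mult_right_mono) auto
    qed
    finally show "norm (matrix_inv X - matrix_inv Y - - (matrix_inv Y ** (X - Y) ** matrix_inv Y)) \<le> e * norm (X - Y)"
      by (simp add: Xi'_def Yi_def)
  qed
qed


declare transpose_matrix_vector[simp del]

definition Pm :: "real^'d2^'d1 \<Rightarrow> real^'d2^'d2" where
  "Pm T = mat 1 - transpose T ** T"

definition DF :: "real \<Rightarrow> real^'d2^'d1 \<Rightarrow> real^'d2^'d1 \<Rightarrow> real^'d2^'d1" where
  "DF eps T D = eps *\<^sub>R (D ** matrix_inv (Pm T) +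
     T ** (matrix_inv (Pm T) ** (transpose D ** T + transpose T ** D) ** matrix_inv (Pm T)))"

lemma sum_prod_univ: "(\<Sum>c\<in>(UNIV::('a::finite \<times> 'b::finite) set). f c) = (\<Sum>a\<in>UNIV. \<Sum>b\<in>UNIV. f (a, b))"
  by (simp add: sum.cartesian_product UNIV_Times_UNIV[symmetric] del: UNIV_Times_UNIV)

lemma smult_mv: "(c *\<^sub>R (M::real^'n^'m)) *v v = c *\<^sub>R (M *v v)"
  by (simp add: matrix_vector_mult_def vec_eq_iff sum_distrib_left mult_ac)

lemma vecm_nth: "vecm X $ (i, j) = X $ i $ j" by (simp add: vecm_def)
lemma unvec_vecm [simp]: "unvec (vecm X) = X" by (simp add: unvec_def vecm_def vec_eq_iff)
lemma vecm_unvec [simp]: "vecm (unvec v) = v" by (simp add: unvec_def vecm_def vec_eq_iff)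
lemma vecm_add: "vecm (X + Y) = vecm X + vecm Y" by (simp add: vecm_def vec_eq_iff)
lemma vecm_scale: "vecm (c *\<^sub>R X) = c *\<^sub>R vecm X" by (simp add: vecm_def vec_eq_iff)
lemma vecm_inj: "vecm X = vecm Y \<Longrightarrow> X = Y" by (metis unvec_vecm)

lemma kron_mv: "kron C B *v vecm X = vecm (B ** X ** transpose C)"
proof -
  have "(kron C B *v vecm X) $ (i, j) = vecm (B ** X ** transpose C) $ (i, j)" for i j
  proof -
    have "(kron C B *v vecm X) $ (i, j) = (\<Sum>k\<in>UNIV. \<Sum>l\<in>UNIV. C$j$l * B$i$k * X$k$l)"
      by (simp add: matrix_vector_mult_def kron_def vecm_def sum_prod_univ)
    also have "\<dots> = (\<Sum>l\<in>UNIV. \<Sum>k\<in>UNIV. C$j$l * B$i$k * X$k$l)" by (rule sum.swap)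
    also have "\<dots> = vecm (B ** X ** transpose C) $ (i, j)"
      by (simp add: vecm_def matrix_matrix_mult_def transpose_def sum_distrib_right sum_distrib_left mult_ac)
    finally show ?thesis .
  qed
  then show ?thesis by (simp add: vec_eq_iff)
qed

lemma commT_mv: "commT *v vecm X = vecm (transpose X)"
proof -
  have "(commT *v vecm X) $ (j, i) = vecm (transpose X) $ (j, i)" for i j
  proof -
    have "(commT *v vecm X) $ (j, i) = (\<Sum>a\<in>UNIV. \<Sum>b\<in>UNIV. (if a = i \<and> b = j then 1 else 0) * X$a$b)"
      by (simp add: matrix_vector_mult_def commT_def vecm_def sum_prod_univ)
    also have "\<dots> = (\<Sum>a\<in>UNIV. if a = i then X$a$j else 0)"
      by (intro sum.cong refl) (auto simp: ifz_mult)
    also have "\<dots> = X$i$j" by simp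
    finally show ?thesis by (simp add: vecm_def transpose_def)
  qed
  then show ?thesis by (simp add: vec_eq_iff)
qed

lemma Pm_pd: "feasible T \<Longrightarrow> pos_def (Pm T)" by (simp add: feasible_def Pm_def)

lemma Qinv:
  fixes S :: "real^'d2^'d1"
  assumes fS: "feasible S"
  shows "matrix_inv (mat 1 - S ** transpose S) = mat 1 + S ** matrix_inv (Pm S) ** transpose S"
proof (rule minv_unique)
  define Pi where "Pi = matrix_inv (Pm S)"
  have PPi: "Pm S ** Pi = mat 1" using minv_right[OF pos_def_invertible[OF Pm_pd[OF fS]]] by (simp add: Pi_def)
  have "(mat 1 - S ** transpose S) ** (mat 1 + S ** Pi ** transpose S)
      = mat 1 + S ** (Pi - mat 1 - transpose S ** S ** Pi) ** transpose S"
    by (simp add: mm_diff_l mm_diff_r mm_add_l mm_add_r matrix_mul_assoc algebra_simps)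
  also have "Pi - mat 1 - transpose S ** S ** Pi = Pm S ** Pi - mat 1"
    by (simp add: Pm_def mm_diff_r)
  also have "\<dots> = 0" using PPi by simp
  finally show "(mat 1 - S ** transpose S) ** (mat 1 + S ** matrix_inv (Pm S) ** transpose S) = mat 1"
    by (simp add: Pi_def)
qed

lemma DF_inj:
  fixes T D :: "real^'d2^'d1"
  assumes eps: "eps > 0" and fT: "feasible T" and z: "DF eps T D = 0"
  shows "D = 0"
proof -
  define Pi where "Pi = matrix_inv (Pm T)"
  define E where "E = transpose D ** T + transpose T ** D"
  have PiP: "pos_def Pi" unfolding Pi_def using pos_def_minv Pm_pd[OF fT] by blast
  have Pis: "transpose Pi = Pi" using PiP pd_sym by blast
  have Es: "transpose E = E" by (simp add: E_def transpose_add' matrix_transpose_mul add.commute)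
  define F where "F = Pi ** E ** Pi"
  have Fs: "transpose F = F" by (simp add: F_def matrix_transpose_mul Pis Es matrix_mul_assoc)
  have "trace (transpose D ** DF eps T D) = 0" using z by (simp add: trace_def)
  moreover have "trace (transpose D ** DF eps T D) =
     eps * (trace (transpose D ** (D ** Pi)) + trace (transpose D ** T ** F))"
    by (simp add: DF_def Pi_def[symmetric] E_def[symmetric] F_def[symmetric] smult_mm_right trace_smult
        mm_add_l trace_add' matrix_mul_assoc)
  ultimately have s0: "trace (transpose D ** (D ** Pi)) + trace (transpose D ** T ** F) = 0"
    using eps by simp
  have c1: "trace (transpose T ** D ** F) = trace (transpose D ** T ** F)"
  proof -
    have "trace (transpose T ** D ** F) = trace (transpose (transpose T ** D ** F))" by (rule trace_transpose_eq)
    also have "\<dots> = trace (F ** (transpose D ** T))" by (simp add: matrix_transpose_mul Fs matrix_mul_assoc)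
    also have "\<dots> = trace (transpose D ** T ** F)" by (rule trace_mul_sym)
    finally show ?thesis .
  qed
  have "trace (E ** F) = 2 * trace (transpose D ** T ** F)"
    unfolding E_def mm_add_r trace_add' c1 by simp
  moreover have "trace (E ** F) = trace (Pi ** E ** Pi ** E)"
    using trace_mul_sym[of E F] by (simp add: F_def matrix_mul_assoc)
  ultimately have "0 \<le> trace (transpose D ** T ** F)" using tr_WEWE[OF PiP Es] by simp
  moreover have t0: "0 \<le> trace (Pi ** (transpose D ** D))" using tr_WDD(1)[OF PiP] .
  moreover have "trace (transpose D ** (D ** Pi)) = trace (Pi ** (transpose D ** D))"
    using trace_mul_sym[of "transpose D ** D" Pi] by (simp add: matrix_mul_assoc)
  ultimately have "trace (Pi ** (transpose D ** D)) = 0" using s0 by linarith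
  then show "D = 0" using tr_WDD(2)[OF PiP] by blast
qed

lemma DF_vec:
  fixes S D :: "real^'d2^'d1"
  assumes eps: "eps > 0" and fS: "feasible S" and A: "A = eps *\<^sub>R (S ** matrix_inv (mat 1 - transpose S ** S))"
  shows "vecm (DF eps S D) = (1/eps) *\<^sub>R ((eps\<^sup>2 *\<^sub>R kron (matrix_inv (mat 1 - transpose S ** S)) (matrix_inv (mat 1 - S ** transpose S))
               + kron (transpose A) A ** commT) *v vecm D)"
proof -
  define Pi where "Pi = matrix_inv (Pm S)"
  have Pis: "transpose Pi = Pi" using pos_def_minv[OF Pm_pd[OF fS]] pd_sym by (simp add: Pi_def)
  have Qi: "matrix_inv (mat 1 - S ** transpose S) = mat 1 + S ** Pi ** transpose S"
    using Qinv[OF fS] by (simp add: Pi_def)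
  have A': "A = eps *\<^sub>R (S ** Pi)" using A by (simp add: Pi_def Pm_def)
  have "(eps\<^sup>2 *\<^sub>R kron (matrix_inv (mat 1 - transpose S ** S)) (matrix_inv (mat 1 - S ** transpose S))
               + kron (transpose A) A ** commT) *v vecm D
      = vecm (eps\<^sup>2 *\<^sub>R ((mat 1 + S ** Pi ** transpose S) ** D ** Pi) + A ** transpose D ** A)"
    by (simp add: matrix_vector_mult_add_rdistrib smult_mv matrix_vector_mul_assoc[symmetric]
        commT_mv kron_mv Qi Pi_def[symmetric] Pm_def[symmetric] Pis vecm_add vecm_scale)
  also have "eps\<^sup>2 *\<^sub>R ((mat 1 + S ** Pi ** transpose S) ** D ** Pi) + A ** transpose D ** A = eps *\<^sub>R DF eps S D"
    unfolding A' DF_def Pi_def[symmetric]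
    by (simp add: mm_add_l mm_add_r smult_mm_left smult_mm_right matrix_mul_assoc transpose_smult
        scaleR_add_right power2_eq_square algebra_simps)
  finally show ?thesis using eps by (simp add: vecm_scale)
qed


declare transpose_matrix_vector[simp del]

definition Fm :: "real \<Rightarrow> real^'d2^'d1 \<Rightarrow> real^'d2^'d1" where
  "Fm eps T = eps *\<^sub>R (T ** matrix_inv (Pm T))"

lemma mm_neg_l: "(A::real^'n^'m) ** (- B) = - (A ** (B::real^'k^'n))"
  by (simp add: matrix_matrix_mult_def vec_eq_iff sum_negf)
lemma mm_neg_r: "(- (A::real^'n^'m)) ** B = - (A ** (B::real^'k^'n))"
  by (simp add: matrix_matrix_mult_def vec_eq_iff sum_negf)

lemma bb_mm: "bounded_bilinear (\<lambda>(A::real^'n^'m) (B::real^'k^'n). A ** B)"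
  unfolding bilinear_conv_bounded_bilinear[symmetric] bilinear_def
  by (auto intro!: linearI simp: mm_add_l mm_add_r smult_mm_left smult_mm_right)

lemma bl_transpose: "bounded_linear (transpose :: real^'n^'m \<Rightarrow> real^'m^'n)"
  unfolding linear_conv_bounded_linear[symmetric]
  by (rule linearI) (simp_all add: transpose_add' transpose_smult)

lemma Pm_deriv: "(Pm has_derivative (\<lambda>D. - (transpose D ** T + transpose T ** D))) (at (T::real^'d2^'d1))"
proof -
  have t: "(transpose has_derivative transpose) (at T)"
    using bounded_linear.has_derivative[OF bl_transpose has_derivative_id] by (simp add: id_def)
  have i: "((\<lambda>x. x) has_derivative (\<lambda>x. x)) (at T)" using has_derivative_id by (simp add: id_def)
  have p: "((\<lambda>x. transpose x ** x) has_derivative (\<lambda>h. transpose T ** h + transpose h ** T)) (at T)"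
    using bounded_bilinear.FDERIV[OF bb_mm t i] by simp
  have "((\<lambda>x. mat 1 - transpose x ** x) has_derivative (\<lambda>h. 0 - (transpose T ** h + transpose h ** T))) (at T)"
    by (rule has_derivative_diff[OF has_derivative_const p])
  then show ?thesis unfolding Pm_def[abs_def] by (rule has_derivative_eq_rhs) (auto simp: add.commute)
qed

lemma Pm_invertible: "feasible T \<Longrightarrow> invertible (Pm T)"
  using Pm_pd pos_def_invertible by blast

lemma F_deriv:
  fixes T :: "real^'d2^'d1"
  assumes fT: "feasible T"
  shows "(Fm eps has_derivative DF eps T) (at T)"
proof -
  define Pi where "Pi = matrix_inv (Pm T)"
  have hi: "(matrix_inv has_derivative (\<lambda>H. - (Pi ** H ** Pi))) (at (Pm T))"
    using minv_deriv[OF Pm_invertible[OF fT]] by (simp add: Pi_def)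
  have c: "((\<lambda>x. matrix_inv (Pm x)) has_derivative (\<lambda>D. - (Pi ** (- (transpose D ** T + transpose T ** D)) ** Pi))) (at T)"
    using has_derivative_compose[OF Pm_deriv hi] .
  have p: "((\<lambda>x. x ** matrix_inv (Pm x)) has_derivative
      (\<lambda>h. T ** (- (Pi ** (- (transpose h ** T + transpose T ** h)) ** Pi)) + h ** matrix_inv (Pm T))) (at T)"
    using bounded_bilinear.FDERIV[OF bb_mm has_derivative_ident c] by simp
  have s: "((\<lambda>x. eps *\<^sub>R (x ** matrix_inv (Pm x))) has_derivative
      (\<lambda>h. eps *\<^sub>R (T ** (- (Pi ** (- (transpose h ** T + transpose T ** h)) ** Pi)) + h ** matrix_inv (Pm T)))) (at T)"
    by (rule has_derivative_scaleR_right[OF p])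
  show ?thesis unfolding Fm_def[abs_def]
    by (rule has_derivative_eq_rhs[OF s]) (auto simp: DF_def Pi_def[symmetric] add.commute fun_eq_iff
        mm_add_l mm_add_r mm_neg_l mm_neg_r mm_diff_l mm_diff_r matrix_mul_assoc smult_mm_left smult_mm_right)
qed

lemma bl_DF: "feasible T \<Longrightarrow> bounded_linear (DF eps T)"
  using F_deriv has_derivative_bounded_linear by blast

lemma bT_aux: fixes T :: "real^'n^'m" and x :: "real^'n"
  assumes m1: "m' > 0" "m' \<le> 1" and mq: "m' * (x \<bullet> x) \<le> x \<bullet> x - (T *v x) \<bullet> (T *v x)"
  shows "norm (T *v x) \<le> sqrt (1 - m') * norm x"
proof -
  have e: "(1 - m') * (x \<bullet> x) = x \<bullet> x - m' * (x \<bullet> x)" by (simp add: left_diff_distrib)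
  have h: "(T *v x) \<bullet> (T *v x) \<le> (1 - m') * (x \<bullet> x)" using mq e by linarith
  have r2: "(sqrt (1 - m'))^2 = 1 - m'" using m1 by simp
  have "(sqrt (1 - m') * norm x)^2 = (1 - m') * (x \<bullet> x)"
    by (simp only: power_mult_distrib r2 power2_norm_eq_inner)
  moreover have "(norm (T *v x))^2 = (T *v x) \<bullet> (T *v x)" by (rule power2_norm_eq_inner)
  ultimately have "(norm (T *v x))^2 \<le> (sqrt (1 - m') * norm x)^2" using h by linarith
  then show ?thesis by (rule power2_le_imp_le) (use m1 in simp)
qed

lemma open_feasible: "open {T :: real^'d2^'d1. feasible T}"
  unfolding open_contains_ball
proof (intro ballI)
  fix T :: "real^'d2^'d1" assume "T \<in> {T. feasible T}"
  then have fT: "feasible T" by simp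
  obtain m where m0: "m > 0" and mq: "\<And>x. m * (x \<bullet> x) \<le> x \<bullet> (Pm T *v x)"
    using pd_lower[OF Pm_pd[OF fT]] by blast
  define m' where "m' = min m 1"
  have m'0: "m' > 0" and m'1: "m' \<le> 1" using m0 by (auto simp: m'_def)
  define r where "r = sqrt (1 - m')"
  have r0: "r \<ge> 0" and r1: "r < 1" using m'0 m'1 by (auto simp: r_def)
  have bT: "norm (T *v x) \<le> r * norm x" for x
  proof -
    have "m' * (x \<bullet> x) \<le> m * (x \<bullet> x)" by (intro mult_right_mono) (auto simp: m'_def)
    also have "\<dots> \<le> x \<bullet> (Pm T *v x)" by (rule mq)
    also have "\<dots> = x \<bullet> x - (T *v x) \<bullet> (T *v x)" unfolding Pm_def by (rule mat1_quad)
    finally have "m' * (x \<bullet> x) \<le> x \<bullet> x - (T *v x) \<bullet> (T *v x)" .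
    then show ?thesis unfolding r_def using bT_aux m'0 m'1 by blast
  qed
  define d where "d = 1 - r"
  have d0: "d > 0" using r1 by (simp add: d_def)
  have "ball T d \<subseteq> {T. feasible T}"
  proof
    fix T' assume "T' \<in> ball T d"
    then have nd: "norm (T' - T) < d" by (simp add: dist_norm norm_minus_commute)
    have q: "x \<bullet> ((mat 1 - transpose T' ** T') *v x) > 0" if x: "x \<noteq> 0" for x
    proof -
      have "T' *v x = T *v x + (T' - T) *v x" by (simp add: matrix_vector_mult_diff_rdistrib)
      then have "norm (T' *v x) \<le> norm (T *v x) + norm ((T' - T) *v x)"
        by (metis norm_triangle_ineq)
      also have "\<dots> \<le> r * norm x + norm (T' - T) * norm x" using bT[of x] mv_norm[of "T' - T" x] by simp
      also have "\<dots> < r * norm x + d * norm x" using nd x by simp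
      also have "\<dots> = norm x" by (simp add: d_def algebra_simps)
      finally have "norm (T' *v x) < norm x" .
      then have "(norm (T' *v x))^2 < (norm x)^2" by (intro power_strict_mono) auto
      then show ?thesis unfolding mat1_quad by (simp add: power2_norm_eq_inner)
    qed
    have "transpose (mat 1 - transpose T' ** T') = mat 1 - transpose T' ** T'"
      by (simp add: transpose_diff' matrix_transpose_mul)
    then show "T' \<in> {T. feasible T}" using q by (simp add: feasible_def pos_def_def)
  qed
  then show "\<exists>e>0. ball T e \<subseteq> {T. feasible T}" using d0 by blast
qed

lemma cont_minvPm: "continuous_on {T :: real^'d2^'d1. feasible T} (\<lambda>T. matrix_inv (Pm T))"
proof (rule continuous_at_imp_continuous_on, intro ballI)
  fix T :: "real^'d2^'d1" assume "T \<in> {T. feasible T}"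
  then have fT: "feasible T" by simp
  have "isCont Pm T" using has_derivative_continuous[OF Pm_deriv] .
  moreover have "isCont matrix_inv (Pm T)" using minv_isCont[OF Pm_invertible[OF fT]] .
  ultimately show "isCont (\<lambda>T. matrix_inv (Pm T)) T" by (rule isCont_o2)
qed

lemma cont_DF: "continuous_on {T :: real^'d2^'d1. feasible T} (\<lambda>T. Blinfun (DF eps T))"
proof (rule continuous_on_blinfun_componentwise)
  fix i :: "real^'d2^'d1" assume "i \<in> Basis"
  define U where "U = {T :: real^'d2^'d1. feasible T}"
  define Mi where "Mi = (\<lambda>T::real^'d2^'d1. matrix_inv (Pm T))"
  have cM: "continuous_on U Mi" unfolding U_def Mi_def by (rule cont_minvPm)
  have ct: "continuous_on U (\<lambda>T. transpose T)" by (rule linear_continuous_on[OF bl_transpose])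
  have c1: "continuous_on U (\<lambda>T. i ** Mi T)"
    by (rule bounded_bilinear.continuous_on[OF bb_mm continuous_on_const cM])
  have c2a: "continuous_on U (\<lambda>T. transpose i ** T)"
    by (rule bounded_bilinear.continuous_on[OF bb_mm continuous_on_const continuous_on_id])
  have c2b: "continuous_on U (\<lambda>T. transpose T ** i)"
    by (rule bounded_bilinear.continuous_on[OF bb_mm ct continuous_on_const])
  have c2: "continuous_on U (\<lambda>T. transpose i ** T + transpose T ** i)"
    by (rule continuous_on_add[OF c2a c2b])
  have c3: "continuous_on U (\<lambda>T. Mi T ** (transpose i ** T + transpose T ** i))"
    by (rule bounded_bilinear.continuous_on[OF bb_mm cM c2])
  have c4: "continuous_on U (\<lambda>T. Mi T ** (transpose i ** T + transpose T ** i) ** Mi T)"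
    by (rule bounded_bilinear.continuous_on[OF bb_mm c3 cM])
  have c5: "continuous_on U (\<lambda>T. T ** (Mi T ** (transpose i ** T + transpose T ** i) ** Mi T))"
    by (rule bounded_bilinear.continuous_on[OF bb_mm continuous_on_id c4])
  have c6: "continuous_on U (\<lambda>T. i ** Mi T + T ** (Mi T ** (transpose i ** T + transpose T ** i) ** Mi T))"
    by (rule continuous_on_add[OF c1 c5])
  have c7: "continuous_on U (\<lambda>T. eps *\<^sub>R (i ** Mi T + T ** (Mi T ** (transpose i ** T + transpose T ** i) ** Mi T)))"
    using bounded_linear.continuous_on[OF bounded_linear_scaleR_right[of eps] c6] by simp
  have "continuous_on U (\<lambda>T. DF eps T i)" using c7 by (simp add: DF_def Mi_def)
  then have cU: "continuous_on {T. feasible T} (\<lambda>T. DF eps T i)" unfolding U_def .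
  show "continuous_on {T. feasible T} (\<lambda>T. blinfun_apply (Blinfun (DF eps T)) i)"
  proof (rule continuous_on_eq[OF cU])
    fix x :: "real^'d2^'d1" assume "x \<in> {T. feasible T}"
    then have "bounded_linear (DF eps x)" using bl_DF by blast
    then show "DF eps x i = blinfun_apply (Blinfun (DF eps x)) i"
      by (simp only: bounded_linear_Blinfun_apply)
  qed
qed


declare transpose_matrix_vector[simp del]

lemma mv_smult: "(M::real^'n^'m) *v (c *\<^sub>R v) = c *\<^sub>R (M *v v)"
  by (simp add: matrix_vector_mult_def vec_eq_iff sum_distrib_left mult_ac)

lemma obj_diff: "objective eps y T - objective eps B T = (y - B) \<bullet> T"
  by (simp add: objective_def frob_inner inner_diff_left)

lemma grad_at:
  fixes G :: "real^'d2^'d1 \<Rightarrow> real^'d2^'d1"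
  assumes eps: "eps > 0" and oV: "open V" and BV: "B \<in> V" and cG: "continuous_on V G"
    and fG: "\<And>y. y \<in> V \<Longrightarrow> feasible (G y)"
    and cr: "\<And>y. y \<in> V \<Longrightarrow> y = eps *\<^sub>R (G y ** matrix_inv (mat 1 - transpose (G y) ** G y))"
  shows "(Wt eps has_derivative frob (G B)) (at B)"
  unfolding has_derivative_at_alt
proof (intro conjI allI impI)
  show "bounded_linear (frob (G B))"
    unfolding frob_inner[abs_def] by (rule bounded_linear_inner_right)
  fix e :: real assume e: "e > 0"
  have "isCont G B" using cG oV BV continuous_on_eq_continuous_at by blast
  then obtain d1 where d1: "d1 > 0" and dG: "\<And>y. dist y B < d1 \<Longrightarrow> dist (G y) (G B) < e"
    using e unfolding continuous_at_eps_delta by blast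
  obtain d2 where d2: "d2 > 0" and bV: "ball B d2 \<subseteq> V" using oV BV open_contains_ball by blast
  show "\<exists>d>0. \<forall>y. norm (y - B) < d \<longrightarrow> norm (Wt eps y - Wt eps B - frob (G B) (y - B)) \<le> e * norm (y - B)"
  proof (intro exI[of _ "min d1 d2"] conjI allI impI)
    show "min d1 d2 > 0" using d1 d2 by simp
    fix y assume y: "norm (y - B) < min d1 d2"
    have yV: "y \<in> V" using y bV by (auto simp: dist_norm norm_minus_commute)
    define Sy where "Sy = G y"
    define SB where "SB = G B"
    have WY: "Wt eps y = objective eps y Sy" using crit_is_max(1)[OF eps fG[OF yV] cr[OF yV]] by (simp add: Sy_def)
    have WB: "Wt eps B = objective eps B SB" using crit_is_max(1)[OF eps fG[OF BV] cr[OF BV]] by (simp add: SB_def)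
    have m1: "objective eps y SB \<le> objective eps y Sy"
      using crit_is_max(2)[OF eps fG[OF yV] cr[OF yV] fG[OF BV]] by (simp add: Sy_def SB_def)
    have m2: "objective eps B Sy \<le> objective eps B SB"
      using crit_is_max(2)[OF eps fG[OF BV] cr[OF BV] fG[OF yV]] by (simp add: Sy_def SB_def)
    define R where "R = Wt eps y - Wt eps B - frob SB (y - B)"
    have fr: "frob SB (y - B) = (y - B) \<bullet> SB" by (simp add: frob_inner inner_commute)
    have R0: "R \<ge> 0" using m1 obj_diff[of eps y SB B] unfolding R_def WY WB fr by linarith
    have "R \<le> (y - B) \<bullet> Sy - (y - B) \<bullet> SB" using m2 obj_diff[of eps y Sy B] unfolding R_def WY WB fr by linarith
    also have "\<dots> = (y - B) \<bullet> (Sy - SB)" by (simp add: inner_diff_right)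
    also have "\<dots> \<le> norm (y - B) * norm (Sy - SB)" by (rule norm_cauchy_schwarz)
    also have "\<dots> \<le> norm (y - B) * e"
    proof -
      have "dist y B < d1" using y by (simp add: dist_norm)
      then have "norm (Sy - SB) < e" using dG by (simp add: Sy_def SB_def dist_norm)
      then show ?thesis by (intro mult_left_mono) auto
    qed
    finally have "R \<le> norm (y - B) * e" .
    then show "norm (Wt eps y - Wt eps B - frob (G B) (y - B)) \<le> e * norm (y - B)"
      using R0 unfolding R_def SB_def by (simp add: mult.commute)
  qed
qed

theorem lemma7:
  fixes eps :: real and A S :: "real^'d2^'d1"
  assumes "eps > 0"
    and "feasible S"
    and "\<forall>S'. feasible S' \<longrightarrow> objective eps A S' \<le> objective eps A S"
  shows "has_hessian (Wt eps)
           (eps *\<^sub>R matrix_inv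
              (eps\<^sup>2 *\<^sub>R kron (matrix_inv (mat 1 - transpose S ** S)) (matrix_inv (mat 1 - S ** transpose S))
               + kron (transpose A) A ** commT))
           A"
proof -
  note eps = assms(1) and fS = assms(2)
  have crit: "A = eps *\<^sub>R (S ** matrix_inv (mat 1 - transpose S ** S))"
    using max_is_crit[OF assms] .
  have AF: "Fm eps S = A" using crit by (simp add: Fm_def Pm_def)
  define U where "U = {T :: real^'d2^'d1. feasible T}"
  have oU: "open U" unfolding U_def by (rule open_feasible)
  have SU: "S \<in> U" using fS by (simp add: U_def)
  have blS: "bounded_linear (DF eps S)" using bl_DF[OF fS] .
  have linS: "linear (DF eps S)" using blS bounded_linear.linear by blast
  have injS: "inj (DF eps S)" using linS DF_inj[OF eps fS] linear_injective_0 by blast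
  obtain gi where gi: "linear gi" "gi \<circ> DF eps S = id"
    using linear_injective_left_inverse[OF linS injS] by blast
  have blgi: "bounded_linear gi" using gi(1) linear_conv_bounded_linear by blast
  have invf: "Blinfun gi o\<^sub>L Blinfun (DF eps S) = id_blinfun"
    by (rule blinfun_eqI) (use gi(2) in \<open>simp add: bounded_linear_Blinfun_apply blS blgi fun_eq_iff\<close>)
  have derF: "(Fm eps has_derivative blinfun_apply (Blinfun (DF eps x))) (at x)" if "x \<in> U" for x
  proof -
    have fx: "feasible x" using that by (simp add: U_def)
    show ?thesis using F_deriv[OF fx] by (simp add: bounded_linear_Blinfun_apply bl_DF[OF fx])
  qed
  have cDF: "continuous_on U (\<lambda>T. Blinfun (DF eps T))" unfolding U_def by (rule cont_DF)
  show ?thesis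
  proof (rule inverse_function_theorem[OF oU _ cDF SU invf])
    show "\<And>x. x \<in> U \<Longrightarrow> (Fm eps has_derivative blinfun_apply (Blinfun (DF eps x))) (at x)"
      by (rule derF)
  next
  fix U' V G g' assume "open U'" and U'U: "U' \<subseteq> U" and SU': "S \<in> U'" and oV: "open V"
    and FV: "Fm eps S \<in> V" and hom: "homeomorphism U' V (Fm eps) G"
    and dG: "\<And>y. y \<in> V \<Longrightarrow> (G has_derivative g' y) (at y)"
    and g'eq: "\<And>y. y \<in> V \<Longrightarrow> g' y = inv (blinfun_apply (Blinfun (DF eps (G y))))"
    and "\<And>y. y \<in> V \<Longrightarrow> bij (blinfun_apply (Blinfun (DF eps (G y))))"
  have AV: "A \<in> V" using FV AF by simp
  have GF: "\<And>x. x \<in> U' \<Longrightarrow> G (Fm eps x) = x" and FG: "\<And>y. y \<in> V \<Longrightarrow> Fm eps (G y) = y"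
    and GV: "G ` V = U'" and cG: "continuous_on V G"
    using hom unfolding homeomorphism_def by auto
  have fG: "feasible (G y)" if "y \<in> V" for y using GV that U'U by (auto simp: U_def)
  have cr: "y = eps *\<^sub>R (G y ** matrix_inv (mat 1 - transpose (G y) ** G y))" if "y \<in> V" for y
    using FG[OF that] by (simp add: Fm_def Pm_def)
  have GA: "G A = S" using GF[OF SU'] AF by simp
  define M where "M = eps\<^sup>2 *\<^sub>R kron (matrix_inv (mat 1 - transpose S ** S)) (matrix_inv (mat 1 - S ** transpose S))
               + kron (transpose A) A ** commT"
  have DFv: "vecm (DF eps S D) = (1/eps) *\<^sub>R (M *v vecm D)" for D
    unfolding M_def by (rule DF_vec[OF eps fS crit])
  have Minv: "invertible M"
  proof -
    have "v = 0" if Mv: "M *v v = 0" for v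
    proof -
      have z0: "vecm (0::real^'d2^'d1) = 0" by (simp add: vecm_def vec_eq_iff)
      have "vecm (DF eps S (unvec v)) = (1/eps) *\<^sub>R (M *v v)" using DFv[of "unvec v"] by simp
      also have "\<dots> = vecm 0" using Mv z0 by simp
      finally have "DF eps S (unvec v) = 0" by (rule vecm_inj)
      then have "unvec v = 0" using DF_inj[OF eps fS] by blast
      then have "vecm (unvec v) = vecm 0" by simp
      then show "v = 0" using z0 by simp
    qed
    then show ?thesis using matrix_left_invertible_ker invertible_left_inverse by blast
  qed
  define H where "H = eps *\<^sub>R matrix_inv M"
  have key: "DF eps S (unvec (H *v vecm X)) = X" for X
  proof -
    have "vecm (DF eps S (unvec (H *v vecm X))) = (1/eps) *\<^sub>R (M *v (H *v vecm X))"
      by (simp add: DFv)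
    also have "\<dots> = (1/eps) *\<^sub>R (eps *\<^sub>R ((M ** matrix_inv M) *v vecm X))"
      by (simp add: H_def smult_mv mv_smult matrix_vector_mul_assoc)
    also have "\<dots> = vecm X" using eps minv_right[OF Minv] by simp
    finally show ?thesis by (rule vecm_inj)
  qed
  have invDF: "inv (DF eps S) = (\<lambda>X. unvec (H *v vecm X))"
  proof
    fix X
    have "inv (DF eps S) X = inv (DF eps S) (DF eps S (unvec (H *v vecm X)))" by (simp add: key)
    also have "\<dots> = unvec (H *v vecm X)" using injS by (rule inv_f_f)
    finally show "inv (DF eps S) X = unvec (H *v vecm X)" .
  qed
  have dGA: "(G has_derivative (\<lambda>X. unvec (H *v vecm X))) (at A)"
    using dG[OF AV] g'eq[OF AV] GA invDF by (simp add: bounded_linear_Blinfun_apply blS)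
  have ev: "\<forall>\<^sub>F B in nhds A. (Wt eps has_derivative frob (G B)) (at B)"
    unfolding eventually_nhds
  proof (intro exI[of _ V] conjI ballI oV AV)
    fix B assume BV: "B \<in> V"
    show "(Wt eps has_derivative frob (G B)) (at B)" by (rule grad_at[OF eps oV BV cG fG cr])
  qed
  show ?thesis unfolding has_hessian_def M_def[symmetric] H_def[symmetric]
    using ev dGA by blast
  qed
qed


end
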